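(* Assume the standing model assumptions below. There exists a constant $C_0>0$, depending only on $d$, $C_V$, $\|\Psi\|$, $\|F\|$, $C_F$, $\sup_k m_k^{-1}$ and $\sup_k \nu_k$ (in particular independent of $f,g,X,Y,\Lambda,t$), with the following property. Let $X,Y\subset\Gamma$ be finite with $\mathrm{dist}(X,Y):=\min_{x\in X,y\in Y}\rho(x,y)>0$, let $\Lambda\subset\Gamma$ be finite with $X\cup Y\subset\Lambda$, and let $f_0\in C_b^1(\Omega_X)$, $g_0\in C^1_b(\Omega_Y)$, $f:=f_0\circ\pi_{X,\Lambda}$, $g:=g_0\circ\pi_{Y,\Lambda}$. Then for all $t\in\mathbb R$, $$\|\{\alpha^t_\Lambda(f),g\}\|_\infty\le 4\,\|f\|_{C^1}\|g\|_{C^1}\,\sqrt{C_0}\,\sinh(\sqrt{C_0}|t|)\,D(X,Y),$$ and in particular $$\|\{\alpha^t_\Lambda(f),g\}\|_\infty\le 4\,\|f\|_{C^1}\|g\|_{C^1}\,\sqrt{C_0}\,\big(e^{\sqrt{C_0}|t|}-1\big)\,D(X,Y),$$ where $D(X,Y):=\sum_{x\in X}\sum_{y\in Y}F(\rho(x,y))$.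
   Context: Standing model assumptions. Fix an integer $d\ge1$. $\Gamma$ is a countable set with a metric $\rho$. $F:[0,\infty)\to(0,\infty)$ is non-increasing with $F(0)=1$, $\|F\|:=\sup_{y\in\Gamma}\sum_{x\in\Gamma}F(\rho(x,y))<\infty$, and there is $C_F>0$ with $\sum_{z\in\Gamma}F(\rho(x,z))F(\rho(z,y))\le C_F F(\rho(x,y))$ for all $x,y\in\Gamma$. For each $k\in\Gamma$ there are a mass $m_k>0$ and a force constant $\nu_k>0$ with $0<\inf_k m_k^{-1}\le\sup_k m_k^{-1}<\infty$ and $0<\inf_k\nu_k\le\sup_k\nu_k<\infty$. For $k,l\in\Gamma$, $V_{kl}:\mathbb R^d\to\mathbb R$ is smooth, $V_{kl}(x)=V_{lk}(-x)$, $V_{kk}=0$, and there are constants $C_V\ge0$, $C_{kl}>0$ with $\|\partial^\beta V_{kl}\|_\infty\le C_{kl}C_V^{|\beta|}$ for every multi-index $\beta$; moreover $\|\Psi\|:=\sup_{k,l\in\Gamma}C_{kl}/F(\rho(k,l))<\infty$. For finite $\Lambda\subset\Gamma$, $\Omega_\Lambda$ is the space of pairs $(p,q)=((p_k)_{k\in\Lambda},(q_k)_{k\in\Lambda})$ with $p_k,q_k\in\mathbb R^d$, i.e. $\Omega_\Lambda\cong\mathbb R^{2|\Lambda|d}$ with Euclidean norm $\|\cdot\|_2$. The local Hamiltonian is $H_\Lambda(p,q)=\sum_{k\in\Lambda}\big(\frac{\|p_k\|^2}{2m_k}+\frac{\nu_k\|q_k\|^2}{2}\big)+\frac12\sum_{k,l\in\Lambda}V_{kl}(q_k-q_l)$;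 its Hamiltonian flow $\Phi^\Lambda_t:\Omega_\Lambda\to\Omega_\Lambda$ is globally defined, and $\alpha^t_\Lambda(h):=h\circ\Phi^\Lambda_t$. For $X\subset\Lambda$, $\Omega_X\subset\Omega_\Lambda$ (entries outside $X$ zero) and $\pi_{X,\Lambda}:\Omega_\Lambda\to\Omega_X$ is the orthogonal projection. $C_b^1(\Omega_X)$ denotes bounded $C^1$ functions with bounded gradient; $\|h\|_{C^1}:=\|h\|_\infty+\sup_{(p,q)}\|\nabla h(p,q)\|_2$. The Poisson bracket on $\Omega_\Lambda$ is $\{h_1,h_2\}=\sum_{j\in\Lambda}\sum_{i=1}^d\big(\frac{\partial h_1}{\partial q_{j,i}}\frac{\partial h_2}{\partial p_{j,i}}-\frac{\partial h_1}{\partial p_{j,i}}\frac{\partial h_2}{\partial q_{j,i}}\big)$. *)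

theory Defs
  imports "HOL-Analysis.Analysis"
begin

text \<open>Phase space points: pairs (p,q) of configurations nat => R^d.
  The countable set Gamma is modelled as a subset of nat.\<close>

type_synonym 'd phase = "(nat \<Rightarrow> real^'d) \<times> (nat \<Rightarrow> real^'d)"

definition Omega :: "nat set \<Rightarrow> 'd::finite phase set" where
  "Omega L = {z. \<forall>k. k \<notin> L \<longrightarrow> fst z k = 0 \<and> snd z k = 0}"

definition proj :: "nat set \<Rightarrow> 'd::finite phase \<Rightarrow> 'd phase" where
  "proj X z = ((\<lambda>k. if k \<in> X then fst z k else 0), (\<lambda>k. if k \<in> X then snd z k else 0))"

definition omega_dist :: "nat set \<Rightarrow> 'd::finite phase \<Rightarrow> 'd phase \<Rightarrow> real" where
  "omega_dist L z w = sqrt (\<Sum>k\<in>L. (norm (fst z k - fst w k))\<^sup>2 + (norm (snd z k - snd w k))\<^sup>2)"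

definition dq :: "('d::finite phase \<Rightarrow> real) \<Rightarrow> nat \<Rightarrow> 'd \<Rightarrow> 'd phase \<Rightarrow> real" where
  "dq h j i z = deriv (\<lambda>s. h (fst z, (snd z)(j := snd z j + s *\<^sub>R axis i 1))) 0"

definition dp :: "('d::finite phase \<Rightarrow> real) \<Rightarrow> nat \<Rightarrow> 'd \<Rightarrow> 'd phase \<Rightarrow> real" where
  "dp h j i z = deriv (\<lambda>s. h ((fst z)(j := fst z j + s *\<^sub>R axis i 1), snd z)) 0"

definition continuous_Omega :: "nat set \<Rightarrow> ('d::finite phase \<Rightarrow> real) \<Rightarrow> bool" where
  "continuous_Omega L g \<longleftrightarrow> (\<forall>z\<in>Omega L. \<forall>e>0. \<exists>\<delta>>0. \<forall>w\<in>Omega L.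
      omega_dist L w z < \<delta> \<longrightarrow> \<bar>g w - g z\<bar> < e)"

definition C1_Omega :: "nat set \<Rightarrow> ('d::finite phase \<Rightarrow> real) \<Rightarrow> bool" where
  "C1_Omega L h \<longleftrightarrow> continuous_Omega L h \<and>
     (\<forall>z\<in>Omega L. \<forall>j\<in>L. \<forall>i.
        (\<lambda>s. h (fst z, (snd z)(j := snd z j + s *\<^sub>R axis i 1))) differentiable (at 0) \<and>
        (\<lambda>s. h ((fst z)(j := fst z j + s *\<^sub>R axis i 1), snd z)) differentiable (at 0)) \<and>
     (\<forall>j\<in>L. \<forall>i. continuous_Omega L (dq h j i) \<and> continuous_Omega L (dp h j i))"

definition grad_norm :: "nat set \<Rightarrow> ('d::finite phase \<Rightarrow> real) \<Rightarrow> 'd phase \<Rightarrow> real" where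
  "grad_norm L h z = sqrt (\<Sum>j\<in>L. \<Sum>i\<in>UNIV. (dq h j i z)\<^sup>2 + (dp h j i z)\<^sup>2)"

definition C1b_Omega :: "nat set \<Rightarrow> ('d::finite phase \<Rightarrow> real) \<Rightarrow> bool" where
  "C1b_Omega L h \<longleftrightarrow> C1_Omega L h \<and> bdd_above ((\<lambda>z. \<bar>h z\<bar>) ` Omega L)
      \<and> bdd_above (grad_norm L h ` Omega L)"

definition C1_norm :: "nat set \<Rightarrow> ('d::finite phase \<Rightarrow> real) \<Rightarrow> real" where
  "C1_norm L h = (SUP z\<in>Omega L. \<bar>h z\<bar>) + (SUP z\<in>Omega L. grad_norm L h z)"

definition poisson :: "nat set \<Rightarrow> ('d::finite phase \<Rightarrow> real) \<Rightarrow> ('d phase \<Rightarrow> real) \<Rightarrow> 'd phase \<Rightarrow> real" where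
  "poisson L h1 h2 z = (\<Sum>j\<in>L. \<Sum>i\<in>UNIV. dq h1 j i z * dp h2 j i z - dp h1 j i z * dq h2 j i z)"

definition hamiltonian :: "nat set \<Rightarrow> (nat \<Rightarrow> real) \<Rightarrow> (nat \<Rightarrow> real)
    \<Rightarrow> (nat \<Rightarrow> nat \<Rightarrow> real^'d \<Rightarrow> real) \<Rightarrow> 'd::finite phase \<Rightarrow> real" where
  "hamiltonian L m \<nu> V z = (\<Sum>k\<in>L. (norm (fst z k))\<^sup>2 / (2 * m k) + \<nu> k * (norm (snd z k))\<^sup>2 / 2)
     + 1/2 * (\<Sum>k\<in>L. \<Sum>l\<in>L. V k l (snd z k - snd z l))"

definition is_ham_flow :: "nat set \<Rightarrow> ('d::finite phase \<Rightarrow> real) \<Rightarrow> (real \<Rightarrow> 'd phase \<Rightarrow> 'd phase) \<Rightarrow> bool" where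
  "is_ham_flow L H \<Phi> \<longleftrightarrow> (\<forall>z\<in>Omega L. \<Phi> 0 z = z \<and> (\<forall>t. \<Phi> t z \<in> Omega L) \<and>
     (\<forall>t. \<forall>k\<in>L.
        ((\<lambda>s. snd (\<Phi> s z) k) has_vector_derivative (\<chi> i. dp H k i (\<Phi> t z))) (at t) \<and>
        ((\<lambda>s. fst (\<Phi> s z) k) has_vector_derivative (\<chi> i. - dq H k i (\<Phi> t z))) (at t)))"

fun partial_iter :: "'d::finite list \<Rightarrow> (real^'d \<Rightarrow> real) \<Rightarrow> real^'d \<Rightarrow> real" where
  "partial_iter [] f = f"
| "partial_iter (i # is) f = (\<lambda>x. deriv (\<lambda>s. partial_iter is f (x + s *\<^sub>R axis i 1)) 0)"

definition smooth_fun :: "(real^'d::finite \<Rightarrow> real) \<Rightarrow> bool" where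
  "smooth_fun f \<longleftrightarrow> (\<forall>\<beta>. continuous_on UNIV (partial_iter \<beta> f) \<and>
      (\<forall>i x. (\<lambda>s. partial_iter \<beta> f (x + s *\<^sub>R axis i 1)) differentiable (at 0)))"

end

theory Submission
  imports Defs "HOL-Analysis.Analysis"
begin

lemma norm_has_real_derivative:
  fixes u :: "real \<Rightarrow> 'a::real_inner"
  assumes "(u has_vector_derivative u') (at t)" "u t \<noteq> 0"
  shows "((\<lambda>s. norm (u s)) has_real_derivative (u' \<bullet> sgn (u t))) (at t)"
proof -
  have "((\<lambda>s. norm (u s)) has_derivative (\<lambda>h. (h *\<^sub>R u') \<bullet> sgn (u t))) (at t)"
    using has_derivative_compose[OF assms(1)[unfolded has_vector_derivative_def] has_derivative_norm[OF assms(2)]]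
    by (simp add: o_def)
  then show ?thesis
    by (simp add: has_field_derivative_def mult.commute[of _ "u' \<bullet> sgn (u t)"])
qed

lemma inner_sgn_le: "(x::'a::real_inner) \<bullet> sgn y \<le> norm x"
proof -
  have "x \<bullet> sgn y \<le> norm x * norm (sgn y)" by (rule order_trans[OF _ norm_cauchy_schwarz]) simp
  also have "\<dots> \<le> norm x" by (cases "y = 0") (auto simp: norm_sgn)
  finally show ?thesis .
qed

lemma crossing:
  fixes u u' :: "'k \<Rightarrow> real \<Rightarrow> 'a::real_inner" and W W' :: "'k \<Rightarrow> real \<Rightarrow> real"
  assumes K: "finite K" and T: "0 \<le> T"
    and du: "\<And>k t. k \<in> K \<Longrightarrow> (u k has_vector_derivative u' k t) (at t)"
    and dW: "\<And>k t. k \<in> K \<Longrightarrow> (W k has_real_derivative W' k t) (at t)"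
    and Wpos: "\<And>k t. k \<in> K \<Longrightarrow> 0 \<le> t \<Longrightarrow> t \<le> T \<Longrightarrow> 0 < W k t"
    and init: "\<And>k. k \<in> K \<Longrightarrow> norm (u k 0) < W k 0"
    and step: "\<And>k t. k \<in> K \<Longrightarrow> 0 \<le> t \<Longrightarrow> t \<le> T \<Longrightarrow> (\<forall>j\<in>K. norm (u j t) \<le> W j t)
         \<Longrightarrow> norm (u k t) = W k t \<Longrightarrow> norm (u' k t) < W' k t"
  shows "\<And>k t. k \<in> K \<Longrightarrow> 0 \<le> t \<Longrightarrow> t \<le> T \<Longrightarrow> norm (u k t) < W k t"
proof (rule ccontr)
  fix k0 t0 assume k0: "k0 \<in> K" and t0: "0 \<le> t0" "t0 \<le> T" and neg: "\<not> norm (u k0 t0) < W k0 t0"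
  have contu: "\<And>k. k \<in> K \<Longrightarrow> continuous_on UNIV (u k)"
    using du by (meson continuous_at_imp_continuous_on has_vector_derivative_continuous)
  have contW: "\<And>k. k \<in> K \<Longrightarrow> continuous_on UNIV (W k)"
    using dW by (meson continuous_at_imp_continuous_on DERIV_isCont)
  define S where "S = {0..T} \<inter> (\<Union>k\<in>K. {t. W k t \<le> norm (u k t)})"
  have "closed S" unfolding S_def
    using K contu contW
    by (intro closed_Int closed_UN) (auto intro!: closed_Collect_le continuous_on_norm)
  moreover have "t0 \<in> S"
  proof -
    have "W k0 t0 \<le> norm (u k0 t0)" using neg by simp
    then have "t0 \<in> (\<Union>k\<in>K. {t. W k t \<le> norm (u k t)})" using k0 by (intro UN_I[OF k0]) simp
    then show ?thesis using t0 unfolding S_def by (intro IntI) simp_all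
  qed
  moreover have "bdd_below S" by (auto simp: S_def bdd_below_def)
  ultimately have IS: "Inf S \<in> S" by (intro closed_contains_Inf) auto
  define ts where "ts = Inf S"
  from IS obtain k where k: "k \<in> K" and ts: "0 \<le> ts" "ts \<le> T" and ge: "W k ts \<le> norm (u k ts)"
    unfolding ts_def S_def by auto
  have below: "\<And>j t. j \<in> K \<Longrightarrow> 0 \<le> t \<Longrightarrow> t < ts \<Longrightarrow> norm (u j t) < W j t"
  proof (rule ccontr)
    fix j t assume "j \<in> K" "0 \<le> t" "t < ts" "\<not> norm (u j t) < W j t"
    then have "W j t \<le> norm (u j t)" by simp
    then have "t \<in> (\<Union>k\<in>K. {t. W k t \<le> norm (u k t)})" by (intro UN_I[OF \<open>j \<in> K\<close>]) simp
    then have "t \<in> S" using ts \<open>0 \<le> t\<close> \<open>t < ts\<close> unfolding S_def by (intro IntI) simp_all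
    then have "ts \<le> t" unfolding ts_def using \<open>bdd_below S\<close> by (rule cInf_lower)
    with \<open>t < ts\<close> show False by simp
  qed
  have tspos: "0 < ts"
  proof (rule ccontr)
    assume "\<not> 0 < ts" then have "ts = 0" using ts by simp
    with ge init[OF k] show False by simp
  qed
  have le_all: "\<forall>j\<in>K. norm (u j ts) \<le> W j ts"
  proof
    fix j assume j: "j \<in> K"
    have lim1: "((\<lambda>t. W j t - norm (u j t)) \<longlongrightarrow> W j ts - norm (u j ts)) (at_left ts)"
      using contu[OF j] contW[OF j]
      by (intro tendsto_intros) (auto simp: continuous_on_def intro: tendsto_within_subset)
    have ev: "eventually (\<lambda>t. 0 \<le> W j t - norm (u j t)) (at_left ts)"
    proof -
      have "eventually (\<lambda>t. t \<in> {0<..<ts}) (at_left ts)"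
        by (rule eventually_at_left_real[OF tspos])
      then show ?thesis
      proof eventually_elim
        case (elim t)
        then have "norm (u j t) < W j t" using below[OF j, of t] by simp
        then show ?case by simp
      qed
    qed
    have "0 \<le> W j ts - norm (u j ts)"
      by (rule tendsto_lowerbound[OF lim1 ev]) simp
    then show "norm (u j ts) \<le> W j ts" by simp
  qed
  then have eq: "norm (u k ts) = W k ts" using ge k by force
  have strict: "norm (u' k ts) < W' k ts" by (rule step[OF k ts le_all eq])
  have nz: "u k ts \<noteq> 0" using eq Wpos[OF k ts] by auto
  have dphi: "((\<lambda>t. W k t - norm (u k t)) has_real_derivative (W' k ts - u' k ts \<bullet> sgn (u k ts))) (at ts)"
    by (intro DERIV_diff dW[OF k] norm_has_real_derivative du[OF k] nz)
  have "0 < W' k ts - u' k ts \<bullet> sgn (u k ts)"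
    using strict inner_sgn_le[of "u' k ts" "u k ts"] by simp
  from DERIV_pos_inc_left[OF dphi this] obtain d where d: "d > 0"
    and dd: "\<And>h. h > 0 \<Longrightarrow> h < d \<Longrightarrow> W k (ts - h) - norm (u k (ts - h)) < W k ts - norm (u k ts)" by blast
  define h where "h = min (d/2) ts"
  have h: "h > 0" "h < d" "h \<le> ts" using d tspos by (auto simp: h_def)
  have "W k (ts - h) - norm (u k (ts - h)) < 0" using dd[OF h(1,2)] eq by simp
  moreover have "norm (u k (ts - h)) < W k (ts - h)" using below[OF k, of "ts - h"] h by simp
  ultimately show False by simp
qed

lemma crossing_sym:
  fixes u u' :: "'k \<Rightarrow> real \<Rightarrow> 'a::real_inner" and W W' :: "'k \<Rightarrow> real \<Rightarrow> real"
  assumes K: "finite K" and T: "0 \<le> T"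
    and du: "\<And>k t. k \<in> K \<Longrightarrow> (u k has_vector_derivative u' k t) (at t)"
    and dW: "\<And>k t. k \<in> K \<Longrightarrow> (W k has_real_derivative W' k t) (at t)"
    and Wpos: "\<And>k t. k \<in> K \<Longrightarrow> 0 \<le> t \<Longrightarrow> t \<le> T \<Longrightarrow> 0 < W k t"
    and init: "\<And>k. k \<in> K \<Longrightarrow> norm (u k 0) < W k 0"
    and step: "\<And>k t. k \<in> K \<Longrightarrow> \<bar>t\<bar> \<le> T \<Longrightarrow> (\<forall>j\<in>K. norm (u j t) \<le> W j \<bar>t\<bar>)
         \<Longrightarrow> norm (u k t) = W k \<bar>t\<bar> \<Longrightarrow> norm (u' k t) < W' k \<bar>t\<bar>"
  shows "\<And>k t. k \<in> K \<Longrightarrow> \<bar>t\<bar> \<le> T \<Longrightarrow> norm (u k t) < W k \<bar>t\<bar>"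
proof -
  fix k t assume k: "k \<in> K" and t: "\<bar>t\<bar> \<le> T"
  have main: "norm (u k (\<sigma> * s)) < W k s" if "\<sigma> = 1 \<or> \<sigma> = -1" "0 \<le> s" "s \<le> T" for \<sigma> s
  proof (rule crossing[where u="\<lambda>k t. u k (\<sigma> * t)" and u'="\<lambda>k t. \<sigma> *\<^sub>R u' k (\<sigma> * t)" and W=W and W'=W', OF K T _ dW Wpos _ _ k that(2,3)])
    fix k t assume k: "k \<in> K"
    show "((\<lambda>t. u k (\<sigma> * t)) has_vector_derivative \<sigma> *\<^sub>R u' k (\<sigma> * t)) (at t)"
      using vector_diff_chain_at[OF _ du[OF k], of "\<lambda>t. \<sigma> * t" \<sigma> t]
      by (auto simp: o_def has_real_derivative_iff_has_vector_derivative[symmetric] intro!: derivative_eq_intros)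
  next
    fix k assume "k \<in> K" then show "norm (u k (\<sigma> * 0)) < W k 0" using init by simp
  next
    fix k t assume k: "k \<in> K" and t: "0 \<le> t" "t \<le> T" and all: "\<forall>j\<in>K. norm (u j (\<sigma> * t)) \<le> W j t"
      and eq: "norm (u k (\<sigma> * t)) = W k t"
    have at: "\<bar>\<sigma> * t\<bar> = t" using that(1) t by auto
    have "norm (u' k (\<sigma> * t)) < W' k t"
      using step[OF k, of "\<sigma> * t"] at all eq t by simp
    then show "norm (\<sigma> *\<^sub>R u' k (\<sigma> * t)) < W' k t" using that(1) by auto
  qed
  show "norm (u k t) < W k \<bar>t\<bar>"
  proof (cases "t \<ge> 0")
    case True then show ?thesis using main[of 1 t] t by simp
  next
    case False then show ?thesis using main[of "-1" "-t"] t by simp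
  qed
qed

declare partial_iter.simps(2)[simp del]

lemma norm_le_componentwise:
  fixes w h :: "real^'d::finite"
  assumes "\<And>j. \<bar>w $ j\<bar> \<le> \<bar>h $ j\<bar>"
  shows "norm w \<le> norm h"
  unfolding norm_vec_def by (rule L2_set_mono) (use assms in auto)

lemma sum_abs_le_card_norm:
  fixes h :: "real^'d::finite"
  shows "(\<Sum>j\<in>UNIV. \<bar>h $ j\<bar>) \<le> real CARD('d) * norm h"
proof -
  have "(\<Sum>j\<in>UNIV. \<bar>h $ j\<bar>) \<le> (\<Sum>j\<in>(UNIV::'d set). norm h)"
    by (intro sum_mono component_le_norm_cart)
  then show ?thesis by simp
qed

lemma line_deriv_shift:
  fixes v :: "'a::real_vector"
  assumes "\<And>x. ((\<lambda>s. f (x + s *\<^sub>R v)) has_real_derivative D x) (at 0)"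
  shows "((\<lambda>s. f (x + s *\<^sub>R v)) has_real_derivative D (x + s0 *\<^sub>R v)) (at s0)"
proof -
  have "((\<lambda>s. f ((x + s0 *\<^sub>R v) + s *\<^sub>R v)) has_real_derivative D (x + s0 *\<^sub>R v)) (at 0)"
    by (rule assms)
  then have "((\<lambda>s. f ((x + s0 *\<^sub>R v) + (s - s0) *\<^sub>R v)) has_real_derivative D (x + s0 *\<^sub>R v)) (at s0)"
    using DERIV_shift[of "\<lambda>s. f ((x + s0 *\<^sub>R v) + s *\<^sub>R v)" "D (x + s0 *\<^sub>R v)" s0 "-s0"]
    by simp
  moreover have "(\<lambda>s. f ((x + s0 *\<^sub>R v) + (s - s0) *\<^sub>R v)) = (\<lambda>s. f (x + s *\<^sub>R v))"
  proof (rule ext)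
    fix s
    have "x + s0 *\<^sub>R v + (s - s0) *\<^sub>R v = x + s *\<^sub>R v" by (simp add: scaleR_diff_left algebra_simps)
    then show "f ((x + s0 *\<^sub>R v) + (s - s0) *\<^sub>R v) = f (x + s *\<^sub>R v)" by (simp only: add.assoc)
  qed
  ultimately show ?thesis by simp
qed

lemma smooth_line_deriv:
  fixes f :: "real^'d::finite \<Rightarrow> real"
  assumes "smooth_fun f"
  shows "((\<lambda>s. partial_iter \<beta> f (x + s *\<^sub>R axis i 1)) has_real_derivative
            partial_iter (i # \<beta>) f (x + s0 *\<^sub>R axis i 1)) (at s0)"
proof (rule line_deriv_shift)
  fix x
  have "(\<lambda>s. partial_iter \<beta> f (x + s *\<^sub>R axis i 1)) differentiable (at 0)"
    using assms unfolding smooth_fun_def by blast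
  then obtain D where D: "((\<lambda>s. partial_iter \<beta> f (x + s *\<^sub>R axis i 1)) has_real_derivative D) (at 0)"
    by (auto simp: real_differentiable_def)
  then have "partial_iter (i # \<beta>) f x = D" by (simp add: DERIV_imp_deriv partial_iter.simps(2))
  with D show "((\<lambda>s. partial_iter \<beta> f (x + s *\<^sub>R axis i 1)) has_real_derivative partial_iter (i # \<beta>) f x) (at 0)"
    by simp
qed

lemma mvt_line:
  fixes \<phi> :: "real^'d::finite \<Rightarrow> real"
  assumes D: "\<And>x s0. ((\<lambda>s. \<phi> (x + s *\<^sub>R axis c 1)) has_real_derivative D (x + s0 *\<^sub>R axis c 1)) (at s0)"
  shows "\<exists>s. \<bar>s\<bar> \<le> \<bar>r\<bar> \<and> \<phi> (x + r *\<^sub>R axis c 1) - \<phi> x = D (x + s *\<^sub>R axis c 1) * r"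
proof -
  consider "r = 0" | "r > 0" | "r < 0" by linarith
  then show ?thesis
  proof cases
    case 1 then show ?thesis by (intro exI[of _ 0]) simp
  next
    case 2
    from MVT2[OF 2, of "\<lambda>s. \<phi> (x + s *\<^sub>R axis c 1)" "\<lambda>s. D (x + s *\<^sub>R axis c 1)"] D
    obtain z where "0 < z" "z < r" "\<phi> (x + r *\<^sub>R axis c 1) - \<phi> (x + 0 *\<^sub>R axis c 1) = (r - 0) * D (x + z *\<^sub>R axis c 1)"
      by blast
    then show ?thesis by (intro exI[of _ z]) (simp add: mult.commute)
  next
    case 3
    from MVT2[OF 3, of "\<lambda>s. \<phi> (x + s *\<^sub>R axis c 1)" "\<lambda>s. D (x + s *\<^sub>R axis c 1)"] D
    obtain z where "r < z" "z < 0" "\<phi> (x + 0 *\<^sub>R axis c 1) - \<phi> (x + r *\<^sub>R axis c 1) = (0 - r) * D (x + z *\<^sub>R axis c 1)"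
      by blast
    then show ?thesis by (intro exI[of _ z]) (simp add: algebra_simps)
  qed
qed

lemma telescope_vec:
  fixes \<phi> :: "real^'d::finite \<Rightarrow> real"
  assumes D: "\<And>c x s0. ((\<lambda>s. \<phi> (x + s *\<^sub>R axis c 1)) has_real_derivative D c (x + s0 *\<^sub>R axis c 1)) (at s0)"
  shows "\<exists>\<xi>. (\<forall>j. norm (\<xi> j - a) \<le> norm h) \<and> \<phi> (a + h) - \<phi> a = (\<Sum>j\<in>UNIV. D j (\<xi> j) * h $ j)"
proof -
  have main: "\<exists>\<xi>. (\<forall>j. norm (\<xi> j - a) \<le> norm h) \<and>
      \<phi> (a + (\<Sum>j\<in>A. h $ j *\<^sub>R axis j 1)) - \<phi> a = (\<Sum>j\<in>A. D j (\<xi> j) * h $ j)" for A :: "'d set"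
  proof (induction A rule: infinite_finite_induct)
    case (infinite A) then show ?case by simp
  next
    case empty then show ?case by (intro exI[of _ "\<lambda>j. a"]) simp
  next
    case (insert c A)
    then obtain \<xi> where \<xi>: "\<forall>j. norm (\<xi> j - a) \<le> norm h"
      and eq: "\<phi> (a + (\<Sum>j\<in>A. h $ j *\<^sub>R axis j 1)) - \<phi> a = (\<Sum>j\<in>A. D j (\<xi> j) * h $ j)" by blast
    define P where "P = a + (\<Sum>j\<in>A. h $ j *\<^sub>R axis j 1)"
    obtain s where s: "\<bar>s\<bar> \<le> \<bar>h $ c\<bar>"
      and mv: "\<phi> (P + (h $ c) *\<^sub>R axis c 1) - \<phi> P = D c (P + s *\<^sub>R axis c 1) * h $ c"
      using mvt_line[where \<phi>=\<phi> and c=c and D="D c" and x=P and r="h $ c"] D by blast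
    define \<xi>' where "\<xi>' = \<xi>(c := P + s *\<^sub>R axis c 1)"
    have "norm (P + s *\<^sub>R axis c 1 - a) \<le> norm h"
    proof (rule norm_le_componentwise)
      fix j
      have "(P + s *\<^sub>R axis c 1 - a) $ j = (if j \<in> A then h $ j else 0) + (if j = c then s else 0)"
        unfolding P_def by (simp add: sum_component axis_def if_distrib cong: if_cong) 
      then show "\<bar>(P + s *\<^sub>R axis c 1 - a) $ j\<bar> \<le> \<bar>h $ j\<bar>"
        using s insert(2) by auto
    qed
    then have n: "\<forall>j. norm (\<xi>' j - a) \<le> norm h" using \<xi> by (simp add: \<xi>'_def)
    have "a + (\<Sum>j\<in>insert c A. h $ j *\<^sub>R axis j 1) = P + (h $ c) *\<^sub>R axis c 1"
      using insert(1,2) by (simp add: P_def algebra_simps)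
    then have "\<phi> (a + (\<Sum>j\<in>insert c A. h $ j *\<^sub>R axis j 1)) - \<phi> a
        = D c (P + s *\<^sub>R axis c 1) * h $ c + (\<Sum>j\<in>A. D j (\<xi> j) * h $ j)"
      using mv eq by (simp add: P_def add.assoc)
    also have "\<dots> = (\<Sum>j\<in>insert c A. D j (\<xi>' j) * h $ j)"
      using insert(1,2) by (auto simp: \<xi>'_def intro!: sum.cong)
    finally show ?case using n by blast
  qed
  have "(\<Sum>j\<in>UNIV. h $ j *\<^sub>R axis j 1) = h"
    by (simp add: vec_eq_iff sum_component axis_def if_distrib[of "\<lambda>x. _ * x"] cong: if_cong)
  then show ?thesis using main[of UNIV] by simp
qed

definition gV :: "(real^'d::finite \<Rightarrow> real) \<Rightarrow> real^'d \<Rightarrow> real^'d" where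
  "gV f a = (\<chi> i. partial_iter [i] f a)"

definition HV :: "(real^'d::finite \<Rightarrow> real) \<Rightarrow> real^'d \<Rightarrow> real^'d^'d" where
  "HV f a = (\<chi> i j. partial_iter [j, i] f a)"

lemma gV_telescope:
  fixes f :: "real^'d::finite \<Rightarrow> real"
  assumes "smooth_fun f"
  shows "\<exists>\<xi>. (\<forall>j. norm (\<xi> j - a) \<le> norm h) \<and>
     partial_iter [i] f (a + h) - partial_iter [i] f a = (\<Sum>j\<in>UNIV. partial_iter [j, i] f (\<xi> j) * h $ j)"
  by (rule telescope_vec[where D="\<lambda>j x. partial_iter [j, i] f x"]) (rule smooth_line_deriv[OF assms])

lemma norm_le_sum_abs_bound:
  fixes w :: "real^'d::finite"
  assumes "\<And>i. \<bar>w $ i\<bar> \<le> B"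
  shows "norm w \<le> real CARD('d) * B"
proof -
  have "norm w \<le> (\<Sum>i\<in>UNIV. \<bar>w $ i\<bar>)" by (rule norm_le_l1_cart)
  also have "\<dots> \<le> (\<Sum>i\<in>(UNIV::'d set). B)" by (intro sum_mono assms)
  finally show ?thesis by simp
qed

lemma gV_lip:
  fixes f :: "real^'d::finite \<Rightarrow> real"
  assumes sm: "smooth_fun f" and bd: "\<And>\<beta> x. \<bar>partial_iter \<beta> f x\<bar> \<le> Cc * CV ^ length \<beta>"
  shows "norm (gV f (a + h) - gV f a) \<le> real CARD('d) ^ 2 * (Cc * CV^2) * norm h"
proof -
  have comp: "\<bar>(gV f (a + h) - gV f a) $ i\<bar> \<le> real CARD('d) * (Cc * CV^2) * norm h" for i
  proof -
    obtain \<xi> where eq: "partial_iter [i] f (a + h) - partial_iter [i] f a = (\<Sum>j\<in>UNIV. partial_iter [j, i] f (\<xi> j) * h $ j)"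
      using gV_telescope[OF sm] by blast
    have "\<bar>(gV f (a + h) - gV f a) $ i\<bar> = \<bar>\<Sum>j\<in>UNIV. partial_iter [j, i] f (\<xi> j) * h $ j\<bar>"
      by (simp add: gV_def eq)
    also have "\<dots> \<le> (\<Sum>j\<in>UNIV. (Cc * CV^2) * \<bar>h $ j\<bar>)"
    proof (rule order_trans[OF sum_abs sum_mono])
      fix j
      have b: "\<bar>partial_iter [j, i] f (\<xi> j)\<bar> \<le> Cc * CV^2" using bd[of "[j, i]" "\<xi> j"] by (simp add: power2_eq_square)
      show "\<bar>partial_iter [j, i] f (\<xi> j) * h $ j\<bar> \<le> Cc * CV\<^sup>2 * \<bar>h $ j\<bar>"
        unfolding abs_mult by (rule mult_right_mono[OF b]) simp
    qed
    also have "\<dots> = (Cc * CV^2) * (\<Sum>j\<in>UNIV. \<bar>h $ j\<bar>)" by (simp add: sum_distrib_left)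
    also have "\<dots> \<le> (Cc * CV^2) * (real CARD('d) * norm h)"
    proof (rule mult_left_mono[OF sum_abs_le_card_norm])
      have "0 \<le> Cc" using bd[of "[]" a] by simp
      then show "0 \<le> Cc * CV^2" by simp
    qed
    finally show ?thesis by (simp add: algebra_simps)
  qed
  have "norm (gV f (a + h) - gV f a) \<le> real CARD('d) * (real CARD('d) * (Cc * CV^2) * norm h)"
    by (rule norm_le_sum_abs_bound[OF comp])
  then show ?thesis by (simp add: power2_eq_square algebra_simps)
qed

lemma HV_component: "(HV f a *v h) $ i = (\<Sum>j\<in>UNIV. partial_iter [j, i] f a * h $ j)"
  by (simp add: HV_def matrix_vector_mult_def)

lemma HV_bound:
  fixes f :: "real^'d::finite \<Rightarrow> real"
  assumes bd: "\<And>\<beta> x. \<bar>partial_iter \<beta> f x\<bar> \<le> Cc * CV ^ length \<beta>"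
  shows "norm (HV f a *v h) \<le> real CARD('d) ^ 2 * (Cc * CV^2) * norm h"
proof -
  have comp: "\<bar>(HV f a *v h) $ i\<bar> \<le> real CARD('d) * (Cc * CV^2) * norm h" for i
  proof -
    have "\<bar>(HV f a *v h) $ i\<bar> \<le> (\<Sum>j\<in>UNIV. (Cc * CV^2) * \<bar>h $ j\<bar>)"
      unfolding HV_component
    proof (rule order_trans[OF sum_abs sum_mono])
      fix j
      have b: "\<bar>partial_iter [j, i] f a\<bar> \<le> Cc * CV^2" using bd[of "[j, i]" a] by (simp add: power2_eq_square)
      show "\<bar>partial_iter [j, i] f a * h $ j\<bar> \<le> Cc * CV\<^sup>2 * \<bar>h $ j\<bar>"
        unfolding abs_mult by (rule mult_right_mono[OF b]) simp
    qed
    also have "\<dots> = (Cc * CV^2) * (\<Sum>j\<in>UNIV. \<bar>h $ j\<bar>)" by (simp add: sum_distrib_left)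
    also have "\<dots> \<le> (Cc * CV^2) * (real CARD('d) * norm h)"
    proof (rule mult_left_mono[OF sum_abs_le_card_norm])
      have "0 \<le> Cc" using bd[of "[]" a] by simp
      then show "0 \<le> Cc * CV^2" by simp
    qed
    finally show ?thesis by (simp add: algebra_simps)
  qed
  have "norm (HV f a *v h) \<le> real CARD('d) * (real CARD('d) * (Cc * CV^2) * norm h)"
    by (rule norm_le_sum_abs_bound[OF comp])
  then show ?thesis by (simp add: power2_eq_square algebra_simps)
qed

lemma HV_linear_diff: "HV f a *v (x - y) = HV f a *v x - HV f a *v y"
  by (simp add: matrix_vector_mult_diff_distrib)

lemma gV_rem:
  fixes f :: "real^'d::finite \<Rightarrow> real"
  assumes sm: "smooth_fun f" and K: "compact K" and e: "0 < e"
  shows "\<exists>\<delta>>0. \<forall>a\<in>K. \<forall>h. norm h < \<delta> \<longrightarrow> norm (gV f (a + h) - gV f a - HV f a *v h) \<le> e * norm h"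
proof -
  define d where "d = real CARD('d)"
  have d1: "1 \<le> d" by (simp add: d_def Suc_le_eq)
  obtain R where R: "\<forall>x\<in>K. norm x \<le> R" using compact_imp_bounded[OF K] by (auto simp: bounded_iff)
  define S where "S = cball (0::real^'d) (R + 1)"
  have cS: "compact S" by (simp add: S_def)
  have contP: "continuous_on UNIV (partial_iter \<beta> f)" for \<beta> using sm by (simp add: smooth_fun_def)
  have contH: "continuous_on S (HV f)"
    unfolding HV_def by (intro continuous_on_vec_lambda continuous_on_subset[OF contP]) auto
  define e' where "e' = e / d^2"
  have e': "0 < e'" using e d1 by (simp add: e'_def)
  from compact_uniformly_continuous[OF contH cS] e'
  obtain \<delta>0 where \<delta>0: "\<delta>0 > 0" and uc: "\<And>x x'. x \<in> S \<Longrightarrow> x' \<in> S \<Longrightarrow> dist x' x < \<delta>0 \<Longrightarrow> dist (HV f x') (HV f x) < e'"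
    unfolding uniformly_continuous_on_def by metis
  define \<delta> where "\<delta> = min \<delta>0 1"
  have "\<delta> > 0" using \<delta>0 by (simp add: \<delta>_def)
  moreover have "norm (gV f (a + h) - gV f a - HV f a *v h) \<le> e * norm h" if a: "a \<in> K" and h: "norm h < \<delta>" for a h
  proof -
    have aS: "a \<in> S" using R a by (auto simp: S_def)
    have comp: "\<bar>(gV f (a + h) - gV f a - HV f a *v h) $ i\<bar> \<le> d * e' * norm h" for i
    proof -
      obtain \<xi> where \<xi>: "\<forall>j. norm (\<xi> j - a) \<le> norm h"
        and eq: "partial_iter [i] f (a + h) - partial_iter [i] f a = (\<Sum>j\<in>UNIV. partial_iter [j, i] f (\<xi> j) * h $ j)"
        using gV_telescope[OF sm] by blast
      have close: "\<bar>partial_iter [j, i] f (\<xi> j) - partial_iter [j, i] f a\<bar> \<le> e'" for j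
      proof -
        have nx: "norm (\<xi> j - a) < \<delta>0" using \<xi> h by (smt (verit) \<delta>_def)
        have "norm (\<xi> j) \<le> norm a + norm (\<xi> j - a)" by (rule norm_triangle_sub)
        then have "\<xi> j \<in> S" using nx h R a \<xi> by (smt (verit) S_def \<delta>_def mem_cball_0)
        then have "dist (HV f (\<xi> j)) (HV f a) < e'" using uc[OF aS] nx by (simp add: dist_norm)
        then have lt: "norm (HV f (\<xi> j) - HV f a) < e'" by (simp add: dist_norm)
        have "\<bar>(HV f (\<xi> j) - HV f a) $ i $ j\<bar> \<le> norm ((HV f (\<xi> j) - HV f a) $ i)" by (rule component_le_norm_cart)
        also have "\<dots> \<le> norm (HV f (\<xi> j) - HV f a)" by (rule Finite_Cartesian_Product.norm_nth_le)
        finally show ?thesis using lt by (simp add: HV_def)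
      qed
      have "(gV f (a + h) - gV f a - HV f a *v h) $ i = (\<Sum>j\<in>UNIV. (partial_iter [j, i] f (\<xi> j) - partial_iter [j, i] f a) * h $ j)"
        by (simp add: gV_def HV_component eq sum_subtractf left_diff_distrib)
      then have "\<bar>(gV f (a + h) - gV f a - HV f a *v h) $ i\<bar> \<le> (\<Sum>j\<in>UNIV. e' * \<bar>h $ j\<bar>)"
        using close by (auto intro!: order_trans[OF sum_abs sum_mono] mult_right_mono simp: abs_mult)
      also have "\<dots> = e' * (\<Sum>j\<in>UNIV. \<bar>h $ j\<bar>)" by (simp add: sum_distrib_left)
      also have "\<dots> \<le> e' * (d * norm h)" unfolding d_def
        by (rule mult_left_mono[OF sum_abs_le_card_norm]) (use e' in simp)
      finally show ?thesis by (simp add: algebra_simps)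
    qed
    have "norm (gV f (a + h) - gV f a - HV f a *v h) \<le> d * (d * e' * norm h)"
      unfolding d_def by (rule norm_le_sum_abs_bound[OF comp[unfolded d_def]])
    also have "\<dots> = e * norm h" using d1 by (simp add: e'_def power2_eq_square)
    finally show ?thesis .
  qed
  ultimately show ?thesis by blast
qed

lemma sqnorm_line: "((\<lambda>s. (norm (x + s *\<^sub>R axis i (1::real)))\<^sup>2) has_real_derivative 2 * x $ i) (at 0)"
proof -
  have eq: "(\<lambda>s. (norm (x + s *\<^sub>R axis i (1::real)))\<^sup>2) = (\<lambda>s. x \<bullet> x + 2 * s * (x $ i) + s^2)"
  proof (rule ext)
    fix s
    let ?e = "axis i (1::real)"
    have "(norm (x + s *\<^sub>R ?e))\<^sup>2 = (x + s *\<^sub>R ?e) \<bullet> (x + s *\<^sub>R ?e)" by (simp add: power2_norm_eq_inner)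
    also have "\<dots> = x \<bullet> x + 2 * s * (x \<bullet> ?e) + s^2 * (?e \<bullet> ?e)"
      by (simp add: inner_add_left inner_add_right inner_commute[of ?e x] power2_eq_square algebra_simps)
    also have "x \<bullet> ?e = x $ i" by (simp add: inner_axis)
    also have "?e \<bullet> ?e = 1" by (simp add: inner_axis_axis)
    finally show "(norm (x + s *\<^sub>R ?e))\<^sup>2 = x \<bullet> x + 2 * s * (x $ i) + s^2" by simp
  qed
  show ?thesis unfolding eq by (auto intro!: derivative_eq_intros)
qed

lemma dp_ham:
  fixes z :: "'d::finite phase"
  assumes L: "finite L" and j: "j \<in> L"
  shows "dp (hamiltonian L m \<nu> V) j i z = fst z j $ i / m j"
proof -
  let ?p = "\<lambda>s. (fst z)(j := fst z j + s *\<^sub>R axis i 1)"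
  have D: "((\<lambda>s. hamiltonian L m \<nu> V (?p s, snd z)) has_real_derivative
      (\<Sum>k\<in>L. (if k = j then 2 * fst z j $ i / (2 * m j) else 0)) + 0) (at 0)"
    unfolding hamiltonian_def fst_conv snd_conv
  proof (intro DERIV_add DERIV_sum DERIV_const)
    fix k assume "k \<in> L"
    show "((\<lambda>s. (norm (?p s k))\<^sup>2 / (2 * m k) + \<nu> k * (norm (snd z k))\<^sup>2 / 2) has_real_derivative
        (if k = j then 2 * fst z j $ i / (2 * m j) else 0)) (at 0)"
    proof (cases "k = j")
      case True
      have "((\<lambda>s. (norm (fst z j + s *\<^sub>R axis i 1))\<^sup>2 / (2 * m j) + \<nu> k * (norm (snd z k))\<^sup>2 / 2) has_real_derivative
        2 * fst z j $ i / (2 * m j) + 0) (at 0)"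
        by (intro DERIV_add DERIV_cdivide sqnorm_line DERIV_const)
      then show ?thesis using True by simp
    next
      case False
      then show ?thesis by (simp add: DERIV_const)
    qed
  qed
  have "(\<Sum>k\<in>L. (if k = j then 2 * fst z j $ i / (2 * m j) else 0)) = 2 * fst z j $ i / (2 * m j)"
    using L j by (simp add: sum.delta)
  also have "\<dots> = fst z j $ i / m j" by simp
  finally show ?thesis using D unfolding dp_def by (simp add: DERIV_imp_deriv)
qed

lemma V_line_scaled:
  fixes f :: "real^'d::finite \<Rightarrow> real"
  assumes "smooth_fun f"
  shows "((\<lambda>s. f (a + (c * s) *\<^sub>R axis i 1)) has_real_derivative c * partial_iter [i] f a) (at 0)"
proof -
  have d0: "((\<lambda>s. partial_iter [] f (a + s *\<^sub>R axis i 1)) has_real_derivative partial_iter [i] f (a + 0 *\<^sub>R axis i 1)) (at 0)"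
    by (rule smooth_line_deriv[OF assms])
  have "((\<lambda>s. f (a + s *\<^sub>R axis i 1)) has_real_derivative partial_iter [i] f a) (at (c * 0))"
    using d0 by simp
  moreover have "((\<lambda>s. c * s) has_real_derivative c) (at 0)" by (rule DERIV_cmult_Id)
  ultimately have "((\<lambda>s. f (a + (c * s) *\<^sub>R axis i 1)) has_real_derivative partial_iter [i] f a * c) (at 0)"
    using DERIV_chain2[where f="\<lambda>s. f (a + s *\<^sub>R axis i 1)" and g="\<lambda>s. c * s" and x=0 and s=UNIV] by simp
  then show ?thesis by (simp add: mult.commute)
qed

lemma partial_antisym:
  fixes f g :: "real^'d::finite \<Rightarrow> real"
  assumes sm: "smooth_fun g" and sym: "\<And>x. f x = g (- x)"
  shows "partial_iter [i] f a = - partial_iter [i] g (- a)"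
proof -
  have "((\<lambda>s. g (- a + ((-1) * s) *\<^sub>R axis i 1)) has_real_derivative (-1) * partial_iter [i] g (- a)) (at 0)"
    by (rule V_line_scaled[OF sm])
  moreover have "(\<lambda>s. g (- a + ((-1) * s) *\<^sub>R axis i 1)) = (\<lambda>s. f (a + s *\<^sub>R axis i 1))"
    by (rule ext) (simp add: sym algebra_simps)
  ultimately have "((\<lambda>s. f (a + s *\<^sub>R axis i 1)) has_real_derivative - partial_iter [i] g (- a)) (at 0)" by simp
  then show ?thesis by (simp add: partial_iter.simps(2) DERIV_imp_deriv)
qed

lemma dq_ham:
  fixes z :: "'d::finite phase"
  assumes L: "finite L" and j: "j \<in> L"
    and sm: "\<And>k l. k \<in> L \<Longrightarrow> l \<in> L \<Longrightarrow> smooth_fun (V k l)"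
    and sym: "\<And>k l x. k \<in> L \<Longrightarrow> l \<in> L \<Longrightarrow> V k l x = V l k (- x)"
  shows "dq (hamiltonian L m \<nu> V) j i z = \<nu> j * snd z j $ i + (\<Sum>l\<in>L. partial_iter [i] (V j l) (snd z j - snd z l))"
proof -
  let ?e = "axis i (1::real)"
  let ?q = "\<lambda>s. (snd z)(j := snd z j + s *\<^sub>R ?e)"
  define c where "c k l = (if k = j then 1 else 0) - (if l = j then 1 else (0::real))" for k l
  define T where "T k l = partial_iter [i] (V k l) (snd z k - snd z l)" for k l
  have qd: "?q s k - ?q s l = (snd z k - snd z l) + (c k l * s) *\<^sub>R ?e" for s k l
    by (simp add: c_def algebra_simps)
  have D1: "((\<lambda>s. \<Sum>k\<in>L. (norm (fst z k))\<^sup>2 / (2 * m k) + \<nu> k * (norm (?q s k))\<^sup>2 / 2) has_real_derivative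
      (\<Sum>k\<in>L. (if k = j then \<nu> j * (2 * snd z j $ i) / 2 else 0))) (at 0)"
  proof (intro DERIV_sum)
    fix k assume "k \<in> L"
    show "((\<lambda>s. (norm (fst z k))\<^sup>2 / (2 * m k) + \<nu> k * (norm (?q s k))\<^sup>2 / 2) has_real_derivative
        (if k = j then \<nu> j * (2 * snd z j $ i) / 2 else 0)) (at 0)"
    proof (cases "k = j")
      case True
      have "((\<lambda>s. (norm (fst z k))\<^sup>2 / (2 * m k) + \<nu> j * (norm (snd z j + s *\<^sub>R ?e))\<^sup>2 / 2) has_real_derivative
        0 + \<nu> j * (2 * snd z j $ i) / 2) (at 0)"
        by (intro DERIV_add DERIV_cdivide DERIV_cmult sqnorm_line DERIV_const)
      then show ?thesis using True by simp
    next
      case False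
      then show ?thesis by (simp add: DERIV_const)
    qed
  qed
  have D2: "((\<lambda>s. 1/2 * (\<Sum>k\<in>L. \<Sum>l\<in>L. V k l (?q s k - ?q s l))) has_real_derivative
      1/2 * (\<Sum>k\<in>L. \<Sum>l\<in>L. c k l * T k l)) (at 0)"
  proof (intro DERIV_cmult DERIV_sum)
    fix k l assume k: "k \<in> L" and l: "l \<in> L"
    have "((\<lambda>s. V k l ((snd z k - snd z l) + (c k l * s) *\<^sub>R ?e)) has_real_derivative c k l * T k l) (at 0)"
      unfolding T_def by (rule V_line_scaled[OF sm[OF k l]])
    then show "((\<lambda>s. V k l (?q s k - ?q s l)) has_real_derivative c k l * T k l) (at 0)"
      by (simp only: qd)
  qed
  have D: "((\<lambda>s. hamiltonian L m \<nu> V (fst z, ?q s)) has_real_derivative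
      (\<Sum>k\<in>L. (if k = j then \<nu> j * (2 * snd z j $ i) / 2 else 0)) + 1/2 * (\<Sum>k\<in>L. \<Sum>l\<in>L. c k l * T k l)) (at 0)"
    unfolding hamiltonian_def fst_conv snd_conv by (rule DERIV_add[OF D1 D2])
  have s1: "(\<Sum>k\<in>L. (if k = j then \<nu> j * (2 * snd z j $ i) / 2 else 0)) = \<nu> j * snd z j $ i"
    using L j by (simp add: sum.delta)
  have anti: "T k j = - T j k" if "k \<in> L" for k
  proof -
    have "partial_iter [i] (V k j) (snd z k - snd z j) = - partial_iter [i] (V j k) (- (snd z k - snd z j))"
      by (rule partial_antisym[OF sm[OF j that]]) (simp add: sym[OF that j])
    then show ?thesis unfolding T_def by simp
  qed
  have "(\<Sum>k\<in>L. \<Sum>l\<in>L. c k l * T k l) = (\<Sum>k\<in>L. \<Sum>l\<in>L. (if k = j then T k l else 0)) - (\<Sum>k\<in>L. \<Sum>l\<in>L. (if l = j then T k l else 0))"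
    by (simp add: c_def left_diff_distrib sum_subtractf if_distrib[of "\<lambda>x. x * _"] cong: if_cong)
  also have "\<dots> = (\<Sum>l\<in>L. T j l) - (\<Sum>k\<in>L. T k j)"
    using L j by (simp add: sum.delta' sum.swap[of "\<lambda>k l. if k = j then T k l else 0"])
  also have "(\<Sum>k\<in>L. T k j) = - (\<Sum>k\<in>L. T j k)"
    using anti by (simp add: sum_negf[symmetric])
  finally have s2: "1/2 * (\<Sum>k\<in>L. \<Sum>l\<in>L. c k l * T k l) = (\<Sum>l\<in>L. T j l)" by simp
  have D': "((\<lambda>s. hamiltonian L m \<nu> V (fst z, ?q s)) has_real_derivative
      \<nu> j * snd z j $ i + (\<Sum>l\<in>L. T j l)) (at 0)"
    using D by (simp only: s1 s2)
  show ?thesis unfolding dq_def T_def using DERIV_imp_deriv[OF D'[unfolded T_def]] by simp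

qed

lemma le_of_eps_bound:
  fixes x A B :: real
  assumes "B \<ge> 0" "\<And>e. e > 0 \<Longrightarrow> x < A + e * B"
  shows "x \<le> A"
proof (rule ccontr)
  assume "\<not> x \<le> A"
  then have xa: "x - A > 0" by simp
  define e where "e = (x - A) / (B + 1)"
  have e: "e > 0" using xa assms(1) by (simp add: e_def)
  have "e * B < x - A"
  proof -
    have "e * B \<le> e * (B + 1) - e" by (simp add: algebra_simps)
    also have "e * (B + 1) = x - A" using assms(1) by (simp add: e_def)
    finally show ?thesis using e by simp
  qed
  with assms(2)[OF e] show False by simp
qed

lemma gronwall_LR:
  fixes u u' :: "'k \<Rightarrow> real \<Rightarrow> 'a::real_inner" and w :: "'k \<Rightarrow> 'k \<Rightarrow> real"
  assumes K: "finite K" and y: "y \<in> K" and \<kappa>: "0 \<le> \<kappa>" and CF: "0 < CF" and S: "0 \<le> S" and \<sigma>: "0 \<le> \<sigma>"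
    and wnn: "\<And>k l. k \<in> K \<Longrightarrow> l \<in> K \<Longrightarrow> 0 \<le> w k l"
    and wconv: "\<And>k l. k \<in> K \<Longrightarrow> l \<in> K \<Longrightarrow> (\<Sum>j\<in>K. w k j * w j l) \<le> CF * w k l"
    and wsum: "\<And>k. k \<in> K \<Longrightarrow> (\<Sum>j\<in>K. w k j) \<le> S"
    and du: "\<And>k t. k \<in> K \<Longrightarrow> (u k has_vector_derivative u' k t) (at t)"
    and bd: "\<And>k t. k \<in> K \<Longrightarrow> norm (u' k t) \<le> \<kappa> * (\<Sum>l\<in>K. w k l * norm (u l t))"
    and init: "\<And>k. k \<in> K \<Longrightarrow> norm (u k 0) \<le> \<sigma> * (if k = y then 1 else 0)"
    and k: "k \<in> K"
  shows "norm (u k t) \<le> \<sigma> * ((if k = y then 1 else 0) + (exp (\<kappa> * CF * \<bar>t\<bar>) - 1) / CF * w k y)"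
proof (rule le_of_eps_bound)
  define lam where "lam = \<kappa> * S + 1"
  show "0 \<le> exp (lam * \<bar>t\<bar>)" by simp
  fix e :: real assume e: "e > 0"
  define A where "A k t = \<sigma> * ((if k = y then 1 else 0) + (exp (\<kappa> * CF * t) - 1) / CF * w k y)" for k t
  define W where "W k t = A k t + e * exp (lam * t)" for k t
  define W' where "W' k t = \<sigma> * (\<kappa> * exp (\<kappa> * CF * t) * w k y) + e * (lam * exp (lam * t))" for k t
  have "norm (u k t) < W k \<bar>t\<bar>"
  proof (rule crossing_sym[OF K _ du _ _ _ _ k order_refl])
    fix k and t :: real assume k: "k \<in> K"
    show "(W k has_real_derivative W' k t) (at t)"
      unfolding W_def W'_def A_def using CF
      by (auto intro!: derivative_eq_intros simp: field_simps)
  next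
    fix k and t :: real assume k: "k \<in> K" and t: "0 \<le> t"
    have "A k t \<ge> 0"
      using \<sigma> wnn[OF k y] CF \<kappa> t by (auto simp: A_def intro!: mult_nonneg_nonneg divide_nonneg_pos)
    moreover have "0 < e * exp (lam * t)" using e by simp
    ultimately show "0 < W k t" by (simp add: W_def)
  next
    fix k assume k: "k \<in> K"
    show "norm (u k 0) < W k 0" using init[OF k] e by (simp add: W_def A_def)
  next
    fix k and s :: real assume k: "k \<in> K" and t: "\<bar>s\<bar> \<le> \<bar>t\<bar>" and all: "\<forall>j\<in>K. norm (u j s) \<le> W j \<bar>s\<bar>"
    define \<tau> where "\<tau> = \<bar>s\<bar>"
    have \<tau>: "0 \<le> \<tau>" by (simp add: \<tau>_def)
    define E where "E = exp (\<kappa> * CF * \<tau>)"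
    have E1: "1 \<le> E" using \<kappa> CF \<tau> by (simp add: E_def)
    have "norm (u' k s) \<le> \<kappa> * (\<Sum>l\<in>K. w k l * norm (u l s))" by (rule bd[OF k])
    also have "\<dots> \<le> \<kappa> * (\<Sum>l\<in>K. w k l * W l \<tau>)"
      using all wnn[OF k] \<kappa> by (auto simp: \<tau>_def intro!: mult_left_mono sum_mono)
    also have "(\<Sum>l\<in>K. w k l * W l \<tau>) = \<sigma> * (\<Sum>l\<in>K. w k l * (if l = y then 1 else 0))
        + \<sigma> * ((E - 1) / CF) * (\<Sum>l\<in>K. w k l * w l y) + e * exp (lam * \<tau>) * (\<Sum>l\<in>K. w k l)"
      by (simp add: W_def A_def E_def algebra_simps sum.distrib sum_distrib_left sum_distrib_right sum_divide_distrib)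
    also have "(\<Sum>l\<in>K. w k l * (if l = y then 1 else 0)) = w k y"
      using K y by (simp add: if_distrib[of "\<lambda>x. _ * x"] sum.delta' cong: if_cong)
    finally have 1: "norm (u' k s) \<le> \<kappa> * (\<sigma> * w k y + \<sigma> * ((E - 1) / CF) * (\<Sum>l\<in>K. w k l * w l y)
        + e * exp (lam * \<tau>) * (\<Sum>l\<in>K. w k l))" .
    have 2: "\<sigma> * ((E - 1) / CF) * (\<Sum>l\<in>K. w k l * w l y) \<le> \<sigma> * ((E - 1) / CF) * (CF * w k y)"
      using wconv[OF k y] \<sigma> E1 CF by (intro mult_left_mono) (auto intro!: divide_nonneg_pos)
    have 3: "e * exp (lam * \<tau>) * (\<Sum>l\<in>K. w k l) \<le> e * exp (lam * \<tau>) * S"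
      using wsum[OF k] e by (intro mult_left_mono) auto
    have "norm (u' k s) \<le> \<kappa> * (\<sigma> * w k y + \<sigma> * ((E - 1) / CF) * (CF * w k y) + e * exp (lam * \<tau>) * S)"
      using 1 2 3 \<kappa> by (smt (verit, best) mult_left_mono)
    also have "\<dots> = \<sigma> * (\<kappa> * E * w k y) + e * exp (lam * \<tau>) * (\<kappa> * S)"
      using CF by (simp add: field_simps)
    also have "\<dots> < \<sigma> * (\<kappa> * E * w k y) + e * (lam * exp (lam * \<tau>))"
      using e by (simp add: lam_def algebra_simps)
    finally show "norm (u' k s) < W' k \<bar>s\<bar>" by (simp add: W'_def E_def \<tau>_def mult.assoc)
  qed simp
  then show "norm (u k t) < \<sigma> * ((if k = y then 1 else 0) + (exp (\<kappa> * CF * \<bar>t\<bar>) - 1) / CF * w k y) + e * exp (lam * \<bar>t\<bar>)"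
    by (simp add: W_def A_def)
qed

lemma gronwall_eta:
  fixes u u' :: "'k \<Rightarrow> real \<Rightarrow> 'a::real_inner" and w :: "'k \<Rightarrow> 'k \<Rightarrow> real"
  assumes K: "finite K" and \<kappa>: "0 \<le> \<kappa>" and S: "0 \<le> S" and \<eta>: "0 \<le> \<eta>"
    and wnn: "\<And>k l. k \<in> K \<Longrightarrow> l \<in> K \<Longrightarrow> 0 \<le> w k l"
    and wsum: "\<And>k. k \<in> K \<Longrightarrow> (\<Sum>j\<in>K. w k j) \<le> S"
    and du: "\<And>k t. k \<in> K \<Longrightarrow> (u k has_vector_derivative u' k t) (at t)"
    and bd: "\<And>k t. k \<in> K \<Longrightarrow> \<bar>t\<bar> \<le> T \<Longrightarrow> norm (u' k t) \<le> \<kappa> * (\<Sum>l\<in>K. w k l * norm (u l t)) + \<eta>"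
    and init: "\<And>k. k \<in> K \<Longrightarrow> u k 0 = 0"
    and k: "k \<in> K" and t: "\<bar>t\<bar> \<le> T"
  shows "norm (u k t) \<le> \<eta> * exp ((\<kappa> * S + 1) * \<bar>t\<bar>)"
proof (rule le_of_eps_bound)
  define lam where "lam = \<kappa> * S + 1"
  show "0 \<le> exp (lam * \<bar>t\<bar>)" by simp
  fix e :: real assume e: "e > 0"
  define W where "W k t = (\<eta> + e) * exp (lam * t)" for k :: 'k and t :: real
  define W' where "W' k t = (\<eta> + e) * (lam * exp (lam * t))" for k :: 'k and t :: real
  have T: "0 \<le> T" using t by simp
  have "norm (u k t) < W k \<bar>t\<bar>"
  proof (rule crossing_sym[OF K T du _ _ _ _ k t])
    fix k and t :: real assume k: "k \<in> K"
    show "(W k has_real_derivative W' k t) (at t)"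
      unfolding W_def W'_def by (auto intro!: derivative_eq_intros simp: field_simps)
  next
    fix k and t :: real assume k: "k \<in> K"
    show "0 < W k t" using e \<eta> by (simp add: W_def)
  next
    fix k assume k: "k \<in> K"
    show "norm (u k 0) < W k 0" using init[OF k] e \<eta> by (simp add: W_def)
  next
    fix k and s :: real assume k: "k \<in> K" and s: "\<bar>s\<bar> \<le> T" and all: "\<forall>j\<in>K. norm (u j s) \<le> W j \<bar>s\<bar>"
    define X where "X = exp (lam * \<bar>s\<bar>)"
    have X1: "1 \<le> X" using \<kappa> S by (simp add: X_def lam_def)
    have "norm (u' k s) \<le> \<kappa> * (\<Sum>l\<in>K. w k l * norm (u l s)) + \<eta>" by (rule bd[OF k s])
    also have "\<kappa> * (\<Sum>l\<in>K. w k l * norm (u l s)) \<le> \<kappa> * (\<Sum>l\<in>K. w k l * ((\<eta> + e) * X))"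
      using all wnn[OF k] \<kappa> by (auto simp: W_def X_def intro!: mult_left_mono sum_mono)
    also have "(\<Sum>l\<in>K. w k l * ((\<eta> + e) * X)) = (\<Sum>l\<in>K. w k l) * ((\<eta> + e) * X)"
      by (simp add: sum_distrib_right)
    also have "\<dots> \<le> S * ((\<eta> + e) * X)"
      using wsum[OF k] e \<eta> X1 by (intro mult_right_mono) auto
    finally have 1: "norm (u' k s) \<le> \<kappa> * (S * ((\<eta> + e) * X)) + \<eta>"
      using \<kappa> by (smt (verit, best) mult_left_mono)
    have 2: "\<eta> < (\<eta> + e) * X" using X1 e \<eta> by (smt (verit, best) mult_less_cancel_left1 mult_le_cancel_left1)
    have "norm (u' k s) < \<kappa> * (S * ((\<eta> + e) * X)) + (\<eta> + e) * X" using 1 2 by simp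
    also have "\<dots> = W' k \<bar>s\<bar>" by (simp add: W'_def X_def lam_def algebra_simps)
    finally show "norm (u' k s) < W' k \<bar>s\<bar>" .
  qed
  then show "norm (u k t) < \<eta> * exp ((\<kappa> * S + 1) * \<bar>t\<bar>) + e * exp (lam * \<bar>t\<bar>)"
    by (simp add: W_def lam_def algebra_simps)
qed

definition site :: "'d::finite phase \<Rightarrow> nat \<Rightarrow> (real^'d) \<times> (real^'d)" where
  "site z k = (fst z k, snd z k)"

definition Gk :: "nat set \<Rightarrow> (nat \<Rightarrow> real) \<Rightarrow> (nat \<Rightarrow> real) \<Rightarrow> (nat \<Rightarrow> nat \<Rightarrow> real^'d \<Rightarrow> real)
   \<Rightarrow> 'd::finite phase \<Rightarrow> nat \<Rightarrow> (real^'d) \<times> (real^'d)" where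
  "Gk L m \<nu> V z k = (- (\<nu> k *\<^sub>R snd z k + (\<Sum>l\<in>L. gV (V k l) (snd z k - snd z l))), (1 / m k) *\<^sub>R fst z k)"

lemma site_bound:
  fixes dp dq :: "nat \<Rightarrow> real^'d::finite" and \<Psi> :: "nat \<Rightarrow> real^'d \<Rightarrow> real^'d"
  assumes L: "finite L" and k: "k \<in> L"
    and \<Psi>: "\<And>l h. l \<in> L \<Longrightarrow> norm (\<Psi> l h) \<le> KK l * norm h"
    and KK: "\<And>l. l \<in> L \<Longrightarrow> 0 \<le> KK l"
  shows "norm ((- (a *\<^sub>R dq k + (\<Sum>l\<in>L. \<Psi> l (dq k - dq l))), b *\<^sub>R dp k))
     \<le> (\<bar>a\<bar> + \<bar>b\<bar> + (\<Sum>l\<in>L. KK l)) * norm (dp k, dq k) + (\<Sum>l\<in>L. KK l * norm (dp l, dq l))"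
proof -
  have nq: "norm (dq l) \<le> norm (dp l, dq l)" for l by (rule norm_snd_le)
  have np: "norm (dp l) \<le> norm (dp l, dq l)" for l by (rule norm_fst_le)
  have s1: "norm (\<Sum>l\<in>L. \<Psi> l (dq k - dq l)) \<le> (\<Sum>l\<in>L. KK l * norm (dp k, dq k) + KK l * norm (dp l, dq l))"
  proof (rule order_trans[OF norm_sum sum_mono])
    fix l assume l: "l \<in> L"
    have "norm (\<Psi> l (dq k - dq l)) \<le> KK l * norm (dq k - dq l)" by (rule \<Psi>[OF l])
    also have "\<dots> \<le> KK l * (norm (dp k, dq k) + norm (dp l, dq l))"
      using KK[OF l] nq[of k] nq[of l] norm_triangle_ineq4[of "dq k" "dq l"]
      by (intro mult_left_mono) auto
    finally show "norm (\<Psi> l (dq k - dq l)) \<le> KK l * norm (dp k, dq k) + KK l * norm (dp l, dq l)"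
      by (simp add: algebra_simps)
  qed
  have "norm ((- (a *\<^sub>R dq k + (\<Sum>l\<in>L. \<Psi> l (dq k - dq l))), b *\<^sub>R dp k))
      \<le> norm (a *\<^sub>R dq k + (\<Sum>l\<in>L. \<Psi> l (dq k - dq l))) + norm (b *\<^sub>R dp k)"
    using norm_Pair_le[of "- (a *\<^sub>R dq k + (\<Sum>l\<in>L. \<Psi> l (dq k - dq l)))" "b *\<^sub>R dp k"] by (simp only: norm_minus_cancel)
  also have "\<dots> \<le> (\<bar>a\<bar> * norm (dq k) + norm (\<Sum>l\<in>L. \<Psi> l (dq k - dq l))) + \<bar>b\<bar> * norm (dp k)"
    using norm_triangle_ineq[of "a *\<^sub>R dq k" "\<Sum>l\<in>L. \<Psi> l (dq k - dq l)"] by simp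
  also have "\<dots> \<le> (\<bar>a\<bar> * norm (dp k, dq k) + (\<Sum>l\<in>L. KK l * norm (dp k, dq k) + KK l * norm (dp l, dq l))) + \<bar>b\<bar> * norm (dp k, dq k)"
    using s1 nq[of k] np[of k] by (intro add_mono mult_left_mono) auto
  also have "\<dots> = (\<bar>a\<bar> + \<bar>b\<bar> + (\<Sum>l\<in>L. KK l)) * norm (dp k, dq k) + (\<Sum>l\<in>L. KK l * norm (dp l, dq l))"
    by (simp add: sum.distrib sum_distrib_right algebra_simps)
  finally show ?thesis .
qed

lemma site_diff: "site z' l - site z l = (fst z' l - fst z l, snd z' l - snd z l)"
  by (simp add: site_def)

locale hsys =
  fixes L :: "nat set" and m \<nu> :: "nat \<Rightarrow> real" and V :: "nat \<Rightarrow> nat \<Rightarrow> real^'d::finite \<Rightarrow> real"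
    and Cc :: "nat \<Rightarrow> nat \<Rightarrow> real" and CV :: real and \<Phi> :: "real \<Rightarrow> 'd phase \<Rightarrow> 'd phase"
    and w :: "nat \<Rightarrow> nat \<Rightarrow> real" and \<kappa> S CF :: real
  assumes finL: "finite L"
    and smooth: "\<And>k l. k \<in> L \<Longrightarrow> l \<in> L \<Longrightarrow> smooth_fun (V k l)"
    and symV: "\<And>k l x. k \<in> L \<Longrightarrow> l \<in> L \<Longrightarrow> V k l x = V l k (- x)"
    and bdV: "\<And>k l \<beta> x. k \<in> L \<Longrightarrow> l \<in> L \<Longrightarrow> \<bar>partial_iter \<beta> (V k l) x\<bar> \<le> Cc k l * CV ^ length \<beta>"
    and flow: "is_ham_flow L (hamiltonian L m \<nu> V) \<Phi>"
    and wnn: "\<And>k l. k \<in> L \<Longrightarrow> l \<in> L \<Longrightarrow> 0 \<le> w k l"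
    and wconv: "\<And>k l. k \<in> L \<Longrightarrow> l \<in> L \<Longrightarrow> (\<Sum>j\<in>L. w k j * w j l) \<le> CF * w k l"
    and wsum: "\<And>k. k \<in> L \<Longrightarrow> (\<Sum>j\<in>L. w k j) \<le> S"
    and CF: "0 < CF" and S: "0 \<le> S" and \<kappa>: "0 \<le> \<kappa>"
    and coup1: "\<And>k. k \<in> L \<Longrightarrow> \<bar>\<nu> k\<bar> + \<bar>1 / m k\<bar> + (\<Sum>l\<in>L. real CARD('d)^2 * (Cc k l * CV^2)) \<le> \<kappa>/2 * w k k"
    and coup2: "\<And>k l. k \<in> L \<Longrightarrow> l \<in> L \<Longrightarrow> real CARD('d)^2 * (Cc k l * CV^2) \<le> \<kappa>/2 * w k l"
begin

abbreviation "G \<equiv> Gk L m \<nu> V"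

lemma Cc_nonneg: "k \<in> L \<Longrightarrow> l \<in> L \<Longrightarrow> 0 \<le> Cc k l"
  using bdV[of k l "[]" 0] by simp

lemma KK_nonneg: "k \<in> L \<Longrightarrow> l \<in> L \<Longrightarrow> 0 \<le> real CARD('d)^2 * (Cc k l * CV^2)"
  using Cc_nonneg by simp

lemma flow_Omega: "z \<in> Omega L \<Longrightarrow> \<Phi> t z \<in> Omega L"
  using flow by (simp add: is_ham_flow_def)

lemma flow_0: "z \<in> Omega L \<Longrightarrow> \<Phi> 0 z = z"
  using flow by (simp add: is_ham_flow_def)

lemma traj_deriv:
  assumes z: "z \<in> Omega L" and k: "k \<in> L"
  shows "((\<lambda>\<tau>. site (\<Phi> \<tau> z) k) has_vector_derivative G (\<Phi> t z) k) (at t)"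
proof -
  let ?H = "hamiltonian L m \<nu> V"
  have d1: "((\<lambda>s. snd (\<Phi> s z) k) has_vector_derivative (\<chi> i. dp ?H k i (\<Phi> t z))) (at t)"
   and d2: "((\<lambda>s. fst (\<Phi> s z) k) has_vector_derivative (\<chi> i. - dq ?H k i (\<Phi> t z))) (at t)"
    using flow z k unfolding is_ham_flow_def by blast+
  have e1: "(\<chi> i. dp ?H k i (\<Phi> t z)) = (1 / m k) *\<^sub>R fst (\<Phi> t z) k"
    by (simp add: vec_eq_iff dp_ham[OF finL k])
  have e2: "(\<chi> i. - dq ?H k i (\<Phi> t z)) = - (\<nu> k *\<^sub>R snd (\<Phi> t z) k + (\<Sum>l\<in>L. gV (V k l) (snd (\<Phi> t z) k - snd (\<Phi> t z) l)))"
    by (simp add: vec_eq_iff dq_ham[OF finL k smooth symV] sum_component gV_def)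
  show ?thesis
    unfolding site_def Gk_def using has_vector_derivative_Pair[OF d2 d1] e1 e2 by simp
qed

lemma G_lip:
  assumes k: "k \<in> L"
  shows "norm (G z' k - G z k) \<le> \<kappa> * (\<Sum>l\<in>L. w k l * norm (site z' l - site z l))"
proof -
  define dp where "dp l = fst z' l - fst z l" for l
  define dq where "dq l = snd z' l - snd z l" for l
  define \<Psi> where "\<Psi> l h = gV (V k l) ((snd z k - snd z l) + h) - gV (V k l) (snd z k - snd z l)" for l h
  define KK where "KK l = real CARD('d)^2 * (Cc k l * CV^2)" for l
  have eq: "G z' k - G z k = (- (\<nu> k *\<^sub>R dq k + (\<Sum>l\<in>L. \<Psi> l (dq k - dq l))), (1 / m k) *\<^sub>R dp k)"
  proof -
    have "(snd z k - snd z l) + (dq k - dq l) = snd z' k - snd z' l" for l by (simp add: dq_def algebra_simps)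
    then show ?thesis
      by (simp add: Gk_def \<Psi>_def dp_def dq_def sum_subtractf algebra_simps)
  qed
  have "norm (G z' k - G z k) \<le> (\<bar>\<nu> k\<bar> + \<bar>1 / m k\<bar> + (\<Sum>l\<in>L. KK l)) * norm (dp k, dq k) + (\<Sum>l\<in>L. KK l * norm (dp l, dq l))"
    unfolding eq
  proof (rule site_bound[OF finL k])
    fix l h assume l: "l \<in> L"
    show "norm (\<Psi> l h) \<le> KK l * norm h"
      unfolding \<Psi>_def KK_def by (rule gV_lip[OF smooth[OF k l] bdV[OF k l]])
  next
    fix l assume "l \<in> L" then show "0 \<le> KK l" using KK_nonneg[OF k] by (simp add: KK_def)
  qed
  also have "\<dots> \<le> \<kappa>/2 * w k k * norm (dp k, dq k) + (\<Sum>l\<in>L. \<kappa>/2 * w k l * norm (dp l, dq l))"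
    using coup1[OF k] coup2[OF k] unfolding KK_def
    by (intro add_mono mult_right_mono sum_mono) auto
  also have "\<kappa>/2 * w k k * norm (dp k, dq k) \<le> (\<Sum>l\<in>L. \<kappa>/2 * w k l * norm (dp l, dq l))"
    using finL k wnn[OF k] \<kappa> by (intro member_le_sum) auto
  finally have "norm (G z' k - G z k) \<le> \<kappa> * (\<Sum>l\<in>L. w k l * norm (dp l, dq l))"
    by (simp add: sum_distrib_left algebra_simps)
  then show ?thesis by (simp add: site_diff dp_def dq_def)
qed

lemma LR_diff:
  assumes z: "z \<in> Omega L" and z': "z' \<in> Omega L" and y: "y \<in> L" and \<sigma>: "0 \<le> \<sigma>"
    and init: "\<And>k. k \<in> L \<Longrightarrow> norm (site z' k - site z k) \<le> \<sigma> * (if k = y then 1 else 0)"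
    and k: "k \<in> L"
  shows "norm (site (\<Phi> t z') k - site (\<Phi> t z) k) \<le> \<sigma> * ((if k = y then 1 else 0) + (exp (\<kappa> * CF * \<bar>t\<bar>) - 1) / CF * w k y)"
proof (rule gronwall_LR[OF finL y \<kappa> CF S \<sigma> wnn wconv wsum _ _ _ k,
      where u="\<lambda>k \<tau>. site (\<Phi> \<tau> z') k - site (\<Phi> \<tau> z) k" and u'="\<lambda>k \<tau>. G (\<Phi> \<tau> z') k - G (\<Phi> \<tau> z) k"])
  fix k t assume k: "k \<in> L"
  show "((\<lambda>\<tau>. site (\<Phi> \<tau> z') k - site (\<Phi> \<tau> z) k) has_vector_derivative G (\<Phi> t z') k - G (\<Phi> t z) k) (at t)"
    by (intro has_vector_derivative_diff traj_deriv z z' k)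
  show "norm (G (\<Phi> t z') k - G (\<Phi> t z) k) \<le> \<kappa> * (\<Sum>l\<in>L. w k l * norm (site (\<Phi> t z') l - site (\<Phi> t z) l))"
    by (rule G_lip[OF k])
next
  fix k assume k: "k \<in> L"
  show "norm (site (\<Phi> 0 z') k - site (\<Phi> 0 z) k) \<le> \<sigma> * (if k = y then 1 else 0)"
    using init[OF k] by (simp add: flow_0 z z')
qed

end

lemma hvd_scale: "(g has_vector_derivative g') F \<Longrightarrow> ((\<lambda>x. c *\<^sub>R g x) has_vector_derivative c *\<^sub>R g') F"
  by (rule bounded_linear.has_vector_derivative[OF bounded_linear_scaleR_right])

lemma finite_delta:
  assumes "finite A" "\<And>a. a \<in> A \<Longrightarrow> \<exists>d>0. \<forall>h::'b::real_normed_vector. norm h < d \<longrightarrow> Q a h"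
  shows "\<exists>d>0. \<forall>a\<in>A. \<forall>h. norm h < d \<longrightarrow> Q a h"
  using assms
proof (induction A rule: finite_induct)
  case empty then show ?case by (intro exI[of _ 1]) simp
next
  case (insert x A)
  then obtain d1 where d1: "d1 > 0" "\<forall>a\<in>A. \<forall>h. norm h < d1 \<longrightarrow> Q a h" by blast
  obtain d2 where d2: "d2 > 0" "\<forall>h. norm h < d2 \<longrightarrow> Q x h" using insert(4)[of x] by blast
  show ?case using d1 d2 by (intro exI[of _ "min d1 d2"]) auto
qed

lemma cauchy_at0_converges:
  fixes f :: "real \<Rightarrow> 'a::{complete_space, real_normed_vector}"
  assumes "\<And>e. e > 0 \<Longrightarrow> \<exists>d>0. \<forall>s r. s \<noteq> 0 \<longrightarrow> r \<noteq> 0 \<longrightarrow> \<bar>s\<bar> < d \<longrightarrow> \<bar>r\<bar> < d \<longrightarrow> dist (f s) (f r) < e"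
  shows "\<exists>v. (f \<longlongrightarrow> v) (at 0)"
proof -
  have "cauchy_filter (filtermap f (at 0))"
    unfolding cauchy_filter_metric_filtermap
  proof (intro allI impI)
    fix e :: real assume "e > 0"
    then obtain d where d: "d > 0" "\<forall>s r. s \<noteq> 0 \<longrightarrow> r \<noteq> 0 \<longrightarrow> \<bar>s\<bar> < d \<longrightarrow> \<bar>r\<bar> < d \<longrightarrow> dist (f s) (f r) < e"
      using assms by blast
    have "eventually (\<lambda>s. s \<noteq> 0 \<and> \<bar>s\<bar> < d) (at (0::real))"
      unfolding eventually_at using d(1) by (auto simp: dist_norm)
    then show "\<exists>P. eventually P (at 0) \<and> (\<forall>x y. P x \<and> P y \<longrightarrow> dist (f x) (f y) < e)"
      using d(2) by blast
  qed
  moreover have "filtermap f (at 0) \<noteq> bot" by (simp add: filtermap_bot_iff)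
  ultimately have "\<exists>c. filtermap f (at 0) \<le> nhds c"
    by (intro cauchy_filter_complete_converges[OF _ complete_UNIV]) auto
  then obtain c where "filtermap f (at 0) \<le> nhds c" by blast
  then show ?thesis unfolding filterlim_def by blast
qed

context hsys
begin

definition lin :: "'d phase \<Rightarrow> nat \<Rightarrow> (nat \<Rightarrow> (real^'d) \<times> (real^'d)) \<Rightarrow> (real^'d) \<times> (real^'d)" where
  "lin Y k D = (- (\<nu> k *\<^sub>R snd (D k) + (\<Sum>l\<in>L. HV (V k l) (snd Y k - snd Y l) *v (snd (D k) - snd (D l)))),
       (1 / m k) *\<^sub>R fst (D k))"

lemma lin_bound:
  assumes k: "k \<in> L"
  shows "norm (lin Y k D) \<le> \<kappa> * (\<Sum>l\<in>L. w k l * norm (D l))"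
proof -
  define KK where "KK l = real CARD('d)^2 * (Cc k l * CV^2)" for l
  have "norm (lin Y k D) \<le> (\<bar>\<nu> k\<bar> + \<bar>1 / m k\<bar> + (\<Sum>l\<in>L. KK l)) * norm (fst (D k), snd (D k))
      + (\<Sum>l\<in>L. KK l * norm (fst (D l), snd (D l)))"
    unfolding lin_def
  proof (rule site_bound[OF finL k, where dp="\<lambda>l. fst (D l)" and dq="\<lambda>l. snd (D l)"])
    fix l h assume l: "l \<in> L"
    show "norm (HV (V k l) (snd Y k - snd Y l) *v h) \<le> KK l * norm h"
      unfolding KK_def by (rule HV_bound[OF bdV[OF k l]])
  next
    fix l assume "l \<in> L" then show "0 \<le> KK l" using KK_nonneg[OF k] by (simp add: KK_def)
  qed
  also have "\<dots> = (\<bar>\<nu> k\<bar> + \<bar>1 / m k\<bar> + (\<Sum>l\<in>L. KK l)) * norm (D k) + (\<Sum>l\<in>L. KK l * norm (D l))"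
    by simp
  also have "\<dots> \<le> \<kappa>/2 * w k k * norm (D k) + (\<Sum>l\<in>L. \<kappa>/2 * w k l * norm (D l))"
    using coup1[OF k] coup2[OF k] unfolding KK_def
    by (intro add_mono mult_right_mono sum_mono) auto
  also have "\<kappa>/2 * w k k * norm (D k) \<le> (\<Sum>l\<in>L. \<kappa>/2 * w k l * norm (D l))"
    using finL k wnn[OF k] \<kappa> by (intro member_le_sum) auto
  finally show ?thesis by (simp add: sum_distrib_left algebra_simps)
qed

lemma lin_comb: "lin Y k (\<lambda>l. a *\<^sub>R D1 l - b *\<^sub>R D2 l) = a *\<^sub>R lin Y k D1 - b *\<^sub>R lin Y k D2"
proof -
  let ?M = "\<lambda>l. HV (V k l) (snd Y k - snd Y l)"
  have t: "?M l *v (snd (a *\<^sub>R D1 k - b *\<^sub>R D2 k) - snd (a *\<^sub>R D1 l - b *\<^sub>R D2 l))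
     = a *\<^sub>R (?M l *v (snd (D1 k) - snd (D1 l))) - b *\<^sub>R (?M l *v (snd (D2 k) - snd (D2 l)))" for l
    by (simp add: matrix_vector_mult_diff_distrib matrix_vector_mult_scaleR algebra_simps)
  have "(\<Sum>l\<in>L. ?M l *v (snd (a *\<^sub>R D1 k - b *\<^sub>R D2 k) - snd (a *\<^sub>R D1 l - b *\<^sub>R D2 l)))
     = a *\<^sub>R (\<Sum>l\<in>L. ?M l *v (snd (D1 k) - snd (D1 l))) - b *\<^sub>R (\<Sum>l\<in>L. ?M l *v (snd (D2 k) - snd (D2 l)))"
    unfolding t by (simp add: sum_subtractf scaleR_sum_right)
  then show ?thesis unfolding lin_def by (simp add: algebra_simps)
qed

definition remk :: "'d phase \<Rightarrow> 'd phase \<Rightarrow> nat \<Rightarrow> nat \<Rightarrow> real^'d" where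
  "remk Y Y' k l = gV (V k l) ((snd Y k - snd Y l) + ((snd Y' k - snd Y k) - (snd Y' l - snd Y l)))
     - gV (V k l) (snd Y k - snd Y l) - HV (V k l) (snd Y k - snd Y l) *v ((snd Y' k - snd Y k) - (snd Y' l - snd Y l))"

lemma G_linearization:
  "G Y' k - G Y k = lin Y k (\<lambda>l. site Y' l - site Y l) + (- (\<Sum>l\<in>L. remk Y Y' k l), 0)"
proof -
  have "(snd Y k - snd Y l) + ((snd Y' k - snd Y k) - (snd Y' l - snd Y l)) = snd Y' k - snd Y' l" for l
    by (simp add: algebra_simps)
  then show ?thesis
    by (simp add: Gk_def lin_def remk_def site_def sum_subtractf sum.distrib algebra_simps)
qed

lemma traj_cont: "z \<in> Omega L \<Longrightarrow> k \<in> L \<Longrightarrow> continuous_on UNIV (\<lambda>\<tau>. snd (\<Phi> \<tau> z) k)"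
proof -
  assume z: "z \<in> Omega L" and k: "k \<in> L"
  have "continuous_on UNIV (\<lambda>\<tau>. site (\<Phi> \<tau> z) k)"
    using traj_deriv[OF z k] by (meson continuous_at_imp_continuous_on has_vector_derivative_continuous)
  then have "continuous_on UNIV (\<lambda>\<tau>. snd (site (\<Phi> \<tau> z) k))" by (intro continuous_intros)
  then show ?thesis by (simp add: site_def)
qed

lemma flow_deriv:
  assumes z: "z \<in> Omega L" and y: "y \<in> L"
    and zs: "\<And>s. zs s \<in> Omega L" and zs0: "zs 0 = z"
    and zsE: "\<And>s l. site (zs s) l - site z l = s *\<^sub>R E l"
    and En: "\<And>l. l \<in> L \<Longrightarrow> norm (E l) \<le> (if l = y then 1 else 0)"
  shows "\<exists>v. \<forall>k\<in>L. ((\<lambda>s. (1/s) *\<^sub>R (site (\<Phi> t (zs s)) k - site (\<Phi> t z) k)) \<longlongrightarrow> v k) (at 0)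
            \<and> norm (v k) \<le> (if k = y then 1 else 0) + (exp (\<kappa> * CF * \<bar>t\<bar>) - 1) / CF * w k y"
proof -
  define T where "T = \<bar>t\<bar>"
  have T0: "0 \<le> T" by (simp add: T_def)
  define M where "M = 1 + (exp (\<kappa> * CF * T) - 1) / CF * S"
  define lam where "lam = \<kappa> * S + 1"
  define \<Delta> where "\<Delta> s k \<tau> = site (\<Phi> \<tau> (zs s)) k - site (\<Phi> \<tau> z) k" for s k \<tau>
  have expge: "1 \<le> exp (\<kappa> * CF * x)" if "0 \<le> x" for x using \<kappa> CF that by simp
  have M1: "1 \<le> M" using expge[OF T0] CF S by (simp add: M_def)
  have LRb: "norm (\<Delta> s k \<tau>) \<le> \<bar>s\<bar> * ((if k = y then 1 else 0) + (exp (\<kappa> * CF * \<bar>\<tau>\<bar>) - 1) / CF * w k y)"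
    if k: "k \<in> L" for s k \<tau>
    unfolding \<Delta>_def
  proof (rule LR_diff[OF z zs y _ _ k])
    show "0 \<le> \<bar>s\<bar>" by simp
    fix k assume k: "k \<in> L"
    show "norm (site (zs s) k - site z k) \<le> \<bar>s\<bar> * (if k = y then 1 else 0)"
      using En[OF k] by (simp add: zsE mult_left_mono)
  qed
  have wky: "0 \<le> w k y \<and> w k y \<le> S" if "k \<in> L" for k
  proof -
    have "w k y \<le> (\<Sum>j\<in>L. w k j)" by (rule member_le_sum[OF y]) (use wnn[OF that] finL in auto)
    then show ?thesis using wsum[OF that] wnn[OF that y] by simp
  qed
  have Mb: "norm (\<Delta> s k \<tau>) \<le> \<bar>s\<bar> * M" if k: "k \<in> L" and \<tau>: "\<bar>\<tau>\<bar> \<le> T" for s k \<tau>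
  proof -
    have "(exp (\<kappa> * CF * \<bar>\<tau>\<bar>) - 1) / CF * w k y \<le> (exp (\<kappa> * CF * T) - 1) / CF * S"
    proof (intro mult_mono divide_right_mono)
      show "exp (\<kappa> * CF * \<bar>\<tau>\<bar>) - 1 \<le> exp (\<kappa> * CF * T) - 1"
        using \<tau> \<kappa> CF by (simp add: mult_left_mono)
    qed (use wky[OF k] CF expge[OF T0] in auto)
    moreover have "(if k = y then 1 else 0) \<le> (1::real)" by simp
    ultimately have "(if k = y then 1 else 0) + (exp (\<kappa> * CF * \<bar>\<tau>\<bar>) - 1) / CF * w k y \<le> M"
      unfolding M_def by linarith
    then show ?thesis using LRb[OF k, of s \<tau>] by (smt (verit) abs_ge_zero mult_left_mono)
  qed
  define Kset where "Kset = (\<Union>p\<in>L \<times> L. (\<lambda>\<tau>. snd (\<Phi> \<tau> z) (fst p) - snd (\<Phi> \<tau> z) (snd p)) ` {-T..T})"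
  have cK: "compact Kset"
    unfolding Kset_def using finL
    by (intro compact_UN compact_continuous_image continuous_on_diff)
       (auto intro: continuous_on_subset[OF traj_cont[OF z]])
  have cauchy: "\<exists>d>0. \<forall>s r. s \<noteq> 0 \<longrightarrow> r \<noteq> 0 \<longrightarrow> \<bar>s\<bar> < d \<longrightarrow> \<bar>r\<bar> < d \<longrightarrow>
        (\<forall>k\<in>L. dist ((1/s) *\<^sub>R \<Delta> s k t) ((1/r) *\<^sub>R \<Delta> r k t) < e0)" if e0: "e0 > 0" for e0
  proof -
    define C1 where "C1 = 4 * (real (card L) + 1) * M * exp (lam * T)"
    have C1: "0 < C1" using M1 by (simp add: C1_def)
    define e where "e = e0 / (2 * C1)"
    have e: "0 < e" using e0 C1 by (simp add: e_def)
    have "\<exists>d>0. \<forall>p\<in>L \<times> L. \<forall>h::real^'d. norm h < d \<longrightarrow> (\<forall>a\<in>Kset.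
        norm (gV (V (fst p) (snd p)) (a + h) - gV (V (fst p) (snd p)) a - HV (V (fst p) (snd p)) a *v h) \<le> e * norm h)"
    proof (rule finite_delta)
      fix p assume "p \<in> L \<times> L"
      then have sm: "smooth_fun (V (fst p) (snd p))" using smooth by auto
      show "\<exists>d>0. \<forall>h::real^'d. norm h < d \<longrightarrow> (\<forall>a\<in>Kset.
        norm (gV (V (fst p) (snd p)) (a + h) - gV (V (fst p) (snd p)) a - HV (V (fst p) (snd p)) a *v h) \<le> e * norm h)"
        using gV_rem[OF sm cK e] by blast
    qed (use finL in auto)
    then obtain d2 where d2: "d2 > 0" and rem: "\<And>k l h a. k \<in> L \<Longrightarrow> l \<in> L \<Longrightarrow> norm h < d2 \<Longrightarrow> a \<in> Kset \<Longrightarrow>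
        norm (gV (V k l) (a + h) - gV (V k l) a - HV (V k l) a *v h) \<le> e * norm h"
      by fastforce
    define d1 where "d1 = d2 / (2 * M)"
    have d1: "0 < d1" using d2 M1 by (simp add: d1_def)
    have rembd: "norm (\<Sum>l\<in>L. remk (\<Phi> \<tau> z) (\<Phi> \<tau> (zs \<sigma>)) k l) \<le> real (card L) * (e * (2 * (\<bar>\<sigma>\<bar> * M)))"
      if k: "k \<in> L" and \<tau>: "\<bar>\<tau>\<bar> \<le> T" and \<sigma>: "\<bar>\<sigma>\<bar> < d1" for k \<tau> \<sigma>
    proof -
      have "norm (\<Sum>l\<in>L. remk (\<Phi> \<tau> z) (\<Phi> \<tau> (zs \<sigma>)) k l) \<le> (\<Sum>l\<in>L. e * (2 * (\<bar>\<sigma>\<bar> * M)))"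
      proof (rule order_trans[OF norm_sum sum_mono])
        fix l assume l: "l \<in> L"
        define h where "h = (snd (\<Phi> \<tau> (zs \<sigma>)) k - snd (\<Phi> \<tau> z) k) - (snd (\<Phi> \<tau> (zs \<sigma>)) l - snd (\<Phi> \<tau> z) l)"
        define a where "a = snd (\<Phi> \<tau> z) k - snd (\<Phi> \<tau> z) l"
        have nq: "norm (snd (\<Phi> \<tau> (zs \<sigma>)) j - snd (\<Phi> \<tau> z) j) \<le> norm (\<Delta> \<sigma> j \<tau>)" for j
          unfolding \<Delta>_def site_diff by (rule norm_snd_le)
        have hb: "norm h \<le> 2 * (\<bar>\<sigma>\<bar> * M)"
          using norm_triangle_ineq4[of "snd (\<Phi> \<tau> (zs \<sigma>)) k - snd (\<Phi> \<tau> z) k" "snd (\<Phi> \<tau> (zs \<sigma>)) l - snd (\<Phi> \<tau> z) l"]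
            nq[of k] nq[of l] Mb[OF k \<tau>, of \<sigma>] Mb[OF l \<tau>, of \<sigma>]
          unfolding h_def by linarith
        have "2 * (\<bar>\<sigma>\<bar> * M) < d2"
        proof -
          have "\<bar>\<sigma>\<bar> * M < d1 * M" using \<sigma> M1 by simp
          then show ?thesis using M1 by (simp add: d1_def)
        qed
        then have hd: "norm h < d2" using hb by simp
        have aK: "a \<in> Kset" unfolding Kset_def a_def using k l \<tau> by (force)
        have "norm (remk (\<Phi> \<tau> z) (\<Phi> \<tau> (zs \<sigma>)) k l) \<le> e * norm h"
          using rem[OF k l hd aK] by (simp add: remk_def a_def h_def)
        also have "\<dots> \<le> e * (2 * (\<bar>\<sigma>\<bar> * M))" using hb e by simp
        finally show "norm (remk (\<Phi> \<tau> z) (\<Phi> \<tau> (zs \<sigma>)) k l) \<le> e * (2 * (\<bar>\<sigma>\<bar> * M))" .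
      qed
      then show ?thesis by simp
    qed
    show ?thesis
    proof (intro exI[of _ d1] conjI d1 allI impI ballI)
      fix s r k0 assume s: "s \<noteq> 0" and r: "r \<noteq> 0" and sd: "\<bar>s\<bar> < d1" and rd: "\<bar>r\<bar> < d1" and k0: "k0 \<in> L"
      define u where "u k \<tau> = (1/s) *\<^sub>R \<Delta> s k \<tau> - (1/r) *\<^sub>R \<Delta> r k \<tau>" for k \<tau>
      define u' where "u' k \<tau> = (1/s) *\<^sub>R (G (\<Phi> \<tau> (zs s)) k - G (\<Phi> \<tau> z) k) - (1/r) *\<^sub>R (G (\<Phi> \<tau> (zs r)) k - G (\<Phi> \<tau> z) k)" for k \<tau>
      define \<eta> where "\<eta> = real (card L) * (e * (2 * M)) * 2"
      have \<eta>: "0 \<le> \<eta>" using e M1 by (simp add: \<eta>_def)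
      have tT: "\<bar>t\<bar> \<le> T" by (simp add: T_def)
      have "norm (u k0 t) \<le> \<eta> * exp ((\<kappa> * S + 1) * \<bar>t\<bar>)"
      proof (rule gronwall_eta[OF finL \<kappa> S \<eta> wnn wsum _ _ _ k0 tT])
        fix k \<tau> assume k: "k \<in> L"
        show "(u k has_vector_derivative u' k \<tau>) (at \<tau>)"
          unfolding u_def u'_def \<Delta>_def
          by (intro has_vector_derivative_diff hvd_scale traj_deriv zs z k)
      next
        fix k \<tau> assume k: "k \<in> L" and \<tau>: "\<bar>\<tau>\<bar> \<le> T"
        define R where "R \<sigma> = (- (\<Sum>l\<in>L. remk (\<Phi> \<tau> z) (\<Phi> \<tau> (zs \<sigma>)) k l), 0::real^'d)" for \<sigma>
        have g: "G (\<Phi> \<tau> (zs \<sigma>)) k - G (\<Phi> \<tau> z) k = lin (\<Phi> \<tau> z) k (\<lambda>l. \<Delta> \<sigma> l \<tau>) + R \<sigma>" for \<sigma>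
          unfolding R_def \<Delta>_def by (rule G_linearization)
        have lc: "lin (\<Phi> \<tau> z) k (\<lambda>l. u l \<tau>) = (1/s) *\<^sub>R lin (\<Phi> \<tau> z) k (\<lambda>l. \<Delta> s l \<tau>) - (1/r) *\<^sub>R lin (\<Phi> \<tau> z) k (\<lambda>l. \<Delta> r l \<tau>)"
          unfolding u_def by (rule lin_comb)
        have dec: "u' k \<tau> = lin (\<Phi> \<tau> z) k (\<lambda>l. u l \<tau>) + ((1/s) *\<^sub>R R s - (1/r) *\<^sub>R R r)"
          unfolding u'_def g lc by (simp add: scaleR_right_distrib algebra_simps)
        have Rb: "norm ((1/\<sigma>) *\<^sub>R R \<sigma>) \<le> real (card L) * (e * (2 * M))" if "\<sigma> \<noteq> 0" "\<bar>\<sigma>\<bar> < d1" for \<sigma>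
        proof -
          have "norm (R \<sigma>) \<le> real (card L) * (e * (2 * (\<bar>\<sigma>\<bar> * M)))"
            unfolding R_def using rembd[OF k \<tau> that(2)] by simp
          have "norm ((1/\<sigma>) *\<^sub>R R \<sigma>) = norm (R \<sigma>) / \<bar>\<sigma>\<bar>" by simp
          also have "\<dots> \<le> (real (card L) * (e * (2 * (\<bar>\<sigma>\<bar> * M)))) / \<bar>\<sigma>\<bar>"
            by (rule divide_right_mono[OF \<open>norm (R \<sigma>) \<le> _\<close>]) simp
          also have "\<dots> = real (card L) * (e * (2 * M))" using that(1) by (simp add: field_simps)
          finally show ?thesis .
        qed
        have "norm (u' k \<tau>) \<le> norm (lin (\<Phi> \<tau> z) k (\<lambda>l. u l \<tau>)) + (norm ((1/s) *\<^sub>R R s) + norm ((1/r) *\<^sub>R R r))"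
          unfolding dec by (intro order_trans[OF norm_triangle_ineq] add_left_mono norm_triangle_ineq4)
        also have "\<dots> \<le> \<kappa> * (\<Sum>l\<in>L. w k l * norm (u l \<tau>)) + \<eta>"
          using lin_bound[OF k, of "\<Phi> \<tau> z" "\<lambda>l. u l \<tau>"] Rb[OF s sd] Rb[OF r rd] unfolding \<eta>_def by simp
        finally show "norm (u' k \<tau>) \<le> \<kappa> * (\<Sum>l\<in>L. w k l * norm (u l \<tau>)) + \<eta>" .
      next
        fix k assume k: "k \<in> L"
        show "u k 0 = 0" using s r by (simp add: u_def \<Delta>_def flow_0 zs z zsE)
      qed
      also have "\<dots> = \<eta> * exp (lam * T)" by (simp add: lam_def T_def)
      also have "\<dots> \<le> C1 * e"
      proof -
        have "0 \<le> M * (e * exp (lam * T))" using M1 e by simp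
        then show ?thesis by (simp add: \<eta>_def C1_def algebra_simps)
      qed
      also have "\<dots> < e0" using C1 e0 by (simp add: e_def)
      finally show "dist ((1/s) *\<^sub>R \<Delta> s k0 t) ((1/r) *\<^sub>R \<Delta> r k0 t) < e0"
        by (simp add: dist_norm u_def)
    qed
  qed
  have "\<forall>k\<in>L. \<exists>v. ((\<lambda>s. (1/s) *\<^sub>R \<Delta> s k t) \<longlongrightarrow> v) (at 0)"
  proof
    fix k assume k: "k \<in> L"
    show "\<exists>v. ((\<lambda>s. (1/s) *\<^sub>R \<Delta> s k t) \<longlongrightarrow> v) (at 0)"
    proof (rule cauchy_at0_converges)
      fix e0 :: real assume "e0 > 0"
      from cauchy[OF this] obtain d where "d > 0" and "\<forall>s r. s \<noteq> 0 \<longrightarrow> r \<noteq> 0 \<longrightarrow> \<bar>s\<bar> < d \<longrightarrow> \<bar>r\<bar> < d \<longrightarrow>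
        (\<forall>k\<in>L. dist ((1/s) *\<^sub>R \<Delta> s k t) ((1/r) *\<^sub>R \<Delta> r k t) < e0)" by blast
      then show "\<exists>d>0. \<forall>s r. s \<noteq> 0 \<longrightarrow> r \<noteq> 0 \<longrightarrow> \<bar>s\<bar> < d \<longrightarrow> \<bar>r\<bar> < d \<longrightarrow>
          dist ((1/s) *\<^sub>R \<Delta> s k t) ((1/r) *\<^sub>R \<Delta> r k t) < e0" using k by blast
    qed
  qed
  then obtain v where v: "\<And>k. k \<in> L \<Longrightarrow> ((\<lambda>s. (1/s) *\<^sub>R \<Delta> s k t) \<longlongrightarrow> v k) (at 0)"
    by (metis bchoice)
  have vb: "norm (v k) \<le> (if k = y then 1 else 0) + (exp (\<kappa> * CF * \<bar>t\<bar>) - 1) / CF * w k y" if k: "k \<in> L" for k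
  proof (rule Lim_norm_ubound[OF at_neq_bot v[OF k]])
    have "eventually (\<lambda>s. s \<noteq> (0::real)) (at 0)" by (simp add: eventually_at_filter)
    then show "\<forall>\<^sub>F s in at 0. norm ((1/s) *\<^sub>R \<Delta> s k t) \<le> (if k = y then 1 else 0) + (exp (\<kappa> * CF * \<bar>t\<bar>) - 1) / CF * w k y"
    proof eventually_elim
      case (elim s)
      have "norm ((1/s) *\<^sub>R \<Delta> s k t) = norm (\<Delta> s k t) / \<bar>s\<bar>" by simp
      also have "\<dots> \<le> (\<bar>s\<bar> * ((if k = y then 1 else 0) + (exp (\<kappa> * CF * \<bar>t\<bar>) - 1) / CF * w k y)) / \<bar>s\<bar>"
        by (rule divide_right_mono[OF LRb[OF k]]) simp
      also have "\<dots> = (if k = y then 1 else 0) + (exp (\<kappa> * CF * \<bar>t\<bar>) - 1) / CF * w k y" using elim by simp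
      finally show ?case .
    qed
  qed
  show ?thesis using v vb unfolding \<Delta>_def by blast
qed

end

lemma telescope_gen:
  fixes h :: "'p \<Rightarrow> real" and P :: "'c set \<Rightarrow> 'p" and line :: "'c \<Rightarrow> 'p \<Rightarrow> real \<Rightarrow> 'p"
  assumes Cd: "finite Cd"
    and step: "\<And>c A. c \<in> Cd \<Longrightarrow> c \<notin> A \<Longrightarrow> A \<subseteq> Cd \<Longrightarrow> P (insert c A) = line c (P A) (\<delta> c)"
    and line0: "\<And>c Z. line c Z 0 = Z"
    and der: "\<And>c A s0. c \<in> Cd \<Longrightarrow> A \<subseteq> Cd \<Longrightarrow> ((\<lambda>s. h (line c (P A) s)) has_real_derivative D c (line c (P A) s0)) (at s0)"
  shows "\<exists>\<xi>. h (P Cd) - h (P {}) = (\<Sum>c\<in>Cd. D c (\<xi> c) * \<delta> c) \<and>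
      (\<forall>c\<in>Cd. \<exists>A s. A \<subseteq> Cd \<and> c \<notin> A \<and> \<bar>s\<bar> \<le> \<bar>\<delta> c\<bar> \<and> \<xi> c = line c (P A) s)"
proof -
  have "B \<subseteq> Cd \<Longrightarrow> \<exists>\<xi>. h (P B) - h (P {}) = (\<Sum>c\<in>B. D c (\<xi> c) * \<delta> c) \<and>
      (\<forall>c\<in>B. \<exists>A s. A \<subseteq> Cd \<and> c \<notin> A \<and> \<bar>s\<bar> \<le> \<bar>\<delta> c\<bar> \<and> \<xi> c = line c (P A) s)" for B
  proof (induction B rule: infinite_finite_induct)
    case (infinite A) then show ?case using Cd finite_subset by blast
  next
    case empty then show ?case by simp
  next
    case (insert c B)
    then have cB: "c \<in> Cd" "B \<subseteq> Cd" by auto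
    from insert obtain \<xi> where eq: "h (P B) - h (P {}) = (\<Sum>c\<in>B. D c (\<xi> c) * \<delta> c)"
      and \<xi>: "\<forall>c\<in>B. \<exists>A s. A \<subseteq> Cd \<and> c \<notin> A \<and> \<bar>s\<bar> \<le> \<bar>\<delta> c\<bar> \<and> \<xi> c = line c (P A) s" by blast
    have "\<exists>s. \<bar>s\<bar> \<le> \<bar>\<delta> c\<bar> \<and> h (line c (P B) (\<delta> c)) - h (line c (P B) 0) = D c (line c (P B) s) * \<delta> c"
    proof -
      let ?g = "\<lambda>s. h (line c (P B) s)"
      have dg: "\<And>x. (?g has_real_derivative D c (line c (P B) x)) (at x)" using der[OF cB] by blast
      consider "\<delta> c = 0" | "\<delta> c > 0" | "\<delta> c < 0" by linarith
      then show ?thesis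
      proof cases
        case 1 then show ?thesis by (intro exI[of _ 0]) simp
      next
        case 2
        from MVT2[OF 2, of ?g "\<lambda>x. D c (line c (P B) x)"] dg obtain x where
          "0 < x" "x < \<delta> c" "?g (\<delta> c) - ?g 0 = (\<delta> c - 0) * D c (line c (P B) x)" by blast
        then show ?thesis by (intro exI[of _ x]) (simp add: mult.commute)
      next
        case 3
        from MVT2[OF 3, of ?g "\<lambda>x. D c (line c (P B) x)"] dg obtain x where
          "\<delta> c < x" "x < 0" "?g 0 - ?g (\<delta> c) = (0 - \<delta> c) * D c (line c (P B) x)" by blast
        then show ?thesis by (intro exI[of _ x]) (simp add: algebra_simps)
      qed
    qed
    then obtain s where s: "\<bar>s\<bar> \<le> \<bar>\<delta> c\<bar>" and mv: "h (P (insert c B)) - h (P B) = D c (line c (P B) s) * \<delta> c"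
      using step[OF cB(1) insert(2) cB(2)] line0 by auto
    define \<xi>' where "\<xi>' = \<xi>(c := line c (P B) s)"
    have "h (P (insert c B)) - h (P {}) = D c (line c (P B) s) * \<delta> c + (\<Sum>c\<in>B. D c (\<xi> c) * \<delta> c)"
      using mv eq by simp
    also have "\<dots> = (\<Sum>c\<in>insert c B. D c (\<xi>' c) * \<delta> c)"
      using insert(1,2) by (auto simp: \<xi>'_def intro!: sum.cong)
    finally have "h (P (insert c B)) - h (P {}) = (\<Sum>c\<in>insert c B. D c (\<xi>' c) * \<delta> c)" .
    moreover have "\<forall>c'\<in>insert c B. \<exists>A s. A \<subseteq> Cd \<and> c' \<notin> A \<and> \<bar>s\<bar> \<le> \<bar>\<delta> c'\<bar> \<and> \<xi>' c' = line c' (P A) s"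
    proof
      fix c' assume c': "c' \<in> insert c B"
      show "\<exists>A s. A \<subseteq> Cd \<and> c' \<notin> A \<and> \<bar>s\<bar> \<le> \<bar>\<delta> c'\<bar> \<and> \<xi>' c' = line c' (P A) s"
      proof (cases "c' = c")
        case True then show ?thesis using s cB insert(2) by (intro exI[of _ B] exI[of _ s]) (simp add: \<xi>'_def)
      next
        case False then show ?thesis using \<xi> c' by (simp add: \<xi>'_def)
      qed
    qed
    ultimately show ?case by blast
  qed
  then show ?thesis by blast
qed

definition coordP :: "nat \<times> 'd \<times> bool \<Rightarrow> 'd::finite phase \<Rightarrow> real" where
  "coordP c Z = (case c of (k, i, b) \<Rightarrow> if b then fst Z k $ i else snd Z k $ i)"

definition lineP :: "nat \<times> 'd \<times> bool \<Rightarrow> 'd::finite phase \<Rightarrow> real \<Rightarrow> 'd phase" where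
  "lineP c Z s = (case c of (k, i, b) \<Rightarrow>
     if b then ((fst Z)(k := fst Z k + s *\<^sub>R axis i 1), snd Z)
     else (fst Z, (snd Z)(k := snd Z k + s *\<^sub>R axis i 1)))"

definition mixP :: "(nat \<times> 'd \<times> bool) set \<Rightarrow> 'd::finite phase \<Rightarrow> 'd phase \<Rightarrow> 'd phase" where
  "mixP A z w = ((\<lambda>k. \<chi> i. if (k, i, True) \<in> A then fst w k $ i else fst z k $ i),
                 (\<lambda>k. \<chi> i. if (k, i, False) \<in> A then snd w k $ i else snd z k $ i))"

definition DP :: "('d::finite phase \<Rightarrow> real) \<Rightarrow> nat \<times> 'd \<times> bool \<Rightarrow> 'd phase \<Rightarrow> real" where
  "DP h c Z = (case c of (k, i, b) \<Rightarrow> if b then dp h k i Z else dq h k i Z)"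

lemma lineP0: "lineP c Z 0 = Z"
  by (cases c) (auto simp: lineP_def)

lemma lineP_add: "lineP c (lineP c Z s0) s = lineP c Z (s0 + s)"
  by (cases c) (auto simp: lineP_def fun_eq_iff algebra_simps scaleR_add_left)

lemma mixP_empty: "mixP {} z w = z"
  by (simp add: mixP_def vec_eq_iff)

lemma mixP_full:
  assumes "z \<in> Omega X" "w \<in> Omega X"
  shows "mixP (X \<times> UNIV \<times> UNIV) z w = w"
  using assms by (auto simp: mixP_def Omega_def vec_eq_iff fun_eq_iff prod_eq_iff)

lemma mixP_step:
  assumes "c \<notin> A"
  shows "mixP (insert c A) z w = lineP c (mixP A z w) (coordP c w - coordP c z)"
proof (cases c)
  case (fields k i b)
  show ?thesis
    using assms unfolding fields
    by (cases b) (auto simp: mixP_def lineP_def coordP_def fun_eq_iff vec_eq_iff axis_def)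
qed

lemma mixP_Omega: "z \<in> Omega X \<Longrightarrow> w \<in> Omega X \<Longrightarrow> mixP A z w \<in> Omega X"
  by (auto simp: mixP_def Omega_def vec_eq_iff)

lemma lineP_Omega: "Z \<in> Omega X \<Longrightarrow> c \<in> X \<times> UNIV \<times> UNIV \<Longrightarrow> lineP c Z s \<in> Omega X"
  by (auto simp: lineP_def Omega_def)

lemma C1_line_deriv:
  fixes h :: "'d::finite phase \<Rightarrow> real"
  assumes f: "C1_Omega X h" and Z: "Z \<in> Omega X" and c: "c \<in> X \<times> UNIV \<times> UNIV"
  shows "((\<lambda>s. h (lineP c Z s)) has_real_derivative DP h c (lineP c Z s0)) (at s0)"
proof -
  have diff: "\<And>Z' :: 'd phase. Z' \<in> Omega X \<Longrightarrow> ((\<lambda>s. h (lineP c Z' s)) has_real_derivative DP h c Z') (at 0)"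
  proof -
    fix Z' :: "'d phase" assume Z': "Z' \<in> Omega X"
    obtain k i b where cc: "c = (k, i, b)" by (cases c)
    have k: "k \<in> X" using c cc by auto
    have "(\<lambda>s. h (lineP c Z' s)) differentiable (at 0)"
      using f Z' k unfolding C1_Omega_def cc lineP_def by (cases b) auto
    then obtain D where D: "((\<lambda>s. h (lineP c Z' s)) has_real_derivative D) (at 0)"
      by (auto simp: real_differentiable_def)
    then have "DP h c Z' = D" unfolding DP_def dp_def dq_def cc lineP_def
      by (cases b) (auto simp: DERIV_imp_deriv)
    with D show "((\<lambda>s. h (lineP c Z' s)) has_real_derivative DP h c Z') (at 0)" by simp
  qed
  have "((\<lambda>s. h (lineP c (lineP c Z s0) s)) has_real_derivative DP h c (lineP c Z s0)) (at 0)"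
    by (rule diff[OF lineP_Omega[OF Z c]])
  then have "((\<lambda>s. h (lineP c Z (s0 + s))) has_real_derivative DP h c (lineP c Z s0)) (at 0)"
    by (simp add: lineP_add)
  then have "((\<lambda>s. h (lineP c Z (s + s0))) has_real_derivative DP h c (lineP c Z s0)) (at 0)"
    by (simp add: add.commute)
  then show ?thesis using DERIV_shift[of "\<lambda>s. h (lineP c Z s)" _ 0 s0] by simp
qed

lemma omega_dist_mono:
  assumes "\<And>k i. k \<in> X \<Longrightarrow> \<bar>(fst a k - fst z k) $ i\<bar> \<le> \<bar>(fst w k - fst z k) $ i\<bar>"
    and "\<And>k i. k \<in> X \<Longrightarrow> \<bar>(snd a k - snd z k) $ i\<bar> \<le> \<bar>(snd w k - snd z k) $ i\<bar>"
  shows "omega_dist X a z \<le> omega_dist X w z"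
  unfolding omega_dist_def
proof (rule real_sqrt_le_mono, rule sum_mono)
  fix k assume k: "k \<in> X"
  have "norm (fst a k - fst z k) \<le> norm (fst w k - fst z k)" using assms(1)[OF k] by (rule norm_le_componentwise)
  moreover have "norm (snd a k - snd z k) \<le> norm (snd w k - snd z k)" using assms(2)[OF k] by (rule norm_le_componentwise)
  ultimately show "(norm (fst a k - fst z k))\<^sup>2 + (norm (snd a k - snd z k))\<^sup>2
      \<le> (norm (fst w k - fst z k))\<^sup>2 + (norm (snd w k - snd z k))\<^sup>2"
    by (intro add_mono power_mono) auto
qed

lemma mix_line_close:
  assumes c: "c \<notin> A" and s: "\<bar>s\<bar> \<le> \<bar>coordP c w - coordP c z\<bar>"
  shows "omega_dist X (lineP c (mixP A z w) s) z \<le> omega_dist X w z"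
proof (rule omega_dist_mono)
  obtain k0 i0 b where cc: "c = (k0, i0, b)" by (cases c)
  fix k i
  show "\<bar>(fst (lineP c (mixP A z w) s) k - fst z k) $ i\<bar> \<le> \<bar>(fst w k - fst z k) $ i\<bar>"
    using c s unfolding cc by (cases b) (auto simp: lineP_def mixP_def coordP_def axis_def)
  show "\<bar>(snd (lineP c (mixP A z w) s) k - snd z k) $ i\<bar> \<le> \<bar>(snd w k - snd z k) $ i\<bar>"
    using c s unfolding cc by (cases b) (auto simp: lineP_def mixP_def coordP_def axis_def)
qed

lemma sum_Cd:
  fixes G :: "nat \<times> 'd::finite \<times> bool \<Rightarrow> real"
  assumes "finite X"
  shows "(\<Sum>c\<in>X \<times> (UNIV::'d set) \<times> (UNIV::bool set). G c) = (\<Sum>x\<in>X. \<Sum>i\<in>UNIV. G (x, i, True) + G (x, i, False))"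
proof -
  have "(\<Sum>c\<in>X \<times> (UNIV::'d set) \<times> (UNIV::bool set). G c) = (\<Sum>x\<in>X. \<Sum>q\<in>(UNIV::'d set) \<times> (UNIV::bool set). G (x, q))"
    by (rule sum.cartesian_product[symmetric, where g="\<lambda>x q. G (x, q)", simplified])
  also have "\<dots> = (\<Sum>x\<in>X. \<Sum>i\<in>UNIV. \<Sum>bb\<in>UNIV. G (x, i, bb))"
    by (rule sum.cong[OF refl]) (rule sum.cartesian_product[symmetric, where g="\<lambda>i bb. G (_, i, bb)", simplified])
  also have "\<dots> = (\<Sum>x\<in>X. \<Sum>i\<in>UNIV. G (x, i, True) + G (x, i, False))"
    by (simp add: UNIV_bool ac_simps)
  finally show ?thesis .
qed

lemma isCont_tendsto0: "(f has_real_derivative D) (at 0) \<Longrightarrow> (f \<longlongrightarrow> f 0) (at 0)"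
  using DERIV_isCont isCont_def by blast

lemma chain_C1:
  fixes f0 :: "'d::finite phase \<Rightarrow> real" and c :: "real \<Rightarrow> 'd phase"
  assumes X: "finite X" and f: "C1_Omega X f0" and cO: "\<And>s. c s \<in> Omega X"
    and da: "\<And>x i. x \<in> X \<Longrightarrow> ((\<lambda>s. fst (c s) x $ i) has_real_derivative a x i) (at 0)"
    and db: "\<And>x i. x \<in> X \<Longrightarrow> ((\<lambda>s. snd (c s) x $ i) has_real_derivative b x i) (at 0)"
  shows "((\<lambda>s. f0 (c s)) has_real_derivative
     (\<Sum>x\<in>X. \<Sum>i\<in>UNIV. dp f0 x i (c 0) * a x i + dq f0 x i (c 0) * b x i)) (at 0)"
proof -
  define Cd where "Cd = X \<times> (UNIV :: 'd set) \<times> (UNIV :: bool set)"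
  have Cdf: "finite Cd" using X by (simp add: Cd_def)
  define \<delta> where "\<delta> s c' = coordP c' (c s) - coordP c' (c 0)" for s c'
  define der where "der c' = (case c' of (k, i, bb) \<Rightarrow> if bb then a k i else b k i)" for c'
  have "\<forall>s. \<exists>\<xi>. f0 (c s) - f0 (c 0) = (\<Sum>c'\<in>Cd. DP f0 c' (\<xi> c') * \<delta> s c') \<and>
      (\<forall>c'\<in>Cd. \<exists>A \<sigma>. A \<subseteq> Cd \<and> c' \<notin> A \<and> \<bar>\<sigma>\<bar> \<le> \<bar>\<delta> s c'\<bar> \<and> \<xi> c' = lineP c' (mixP A (c 0) (c s)) \<sigma>)"
  proof
    fix s
    have "\<exists>\<xi>. f0 (mixP Cd (c 0) (c s)) - f0 (mixP {} (c 0) (c s)) = (\<Sum>c'\<in>Cd. DP f0 c' (\<xi> c') * \<delta> s c') \<and>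
      (\<forall>c'\<in>Cd. \<exists>A \<sigma>. A \<subseteq> Cd \<and> c' \<notin> A \<and> \<bar>\<sigma>\<bar> \<le> \<bar>\<delta> s c'\<bar> \<and> \<xi> c' = lineP c' (mixP A (c 0) (c s)) \<sigma>)"
    proof (rule telescope_gen[OF Cdf])
      fix c' :: "nat \<times> 'd \<times> bool" and A assume "c' \<notin> A"
      then show "mixP (insert c' A) (c 0) (c s) = lineP c' (mixP A (c 0) (c s)) (\<delta> s c')"
        unfolding \<delta>_def by (rule mixP_step)
    next
      fix c' :: "nat \<times> 'd \<times> bool" and Z show "lineP c' Z 0 = Z" by (rule lineP0)
    next
      fix c' :: "nat \<times> 'd \<times> bool" and A s0 assume "c' \<in> Cd"
      then show "((\<lambda>\<sigma>. f0 (lineP c' (mixP A (c 0) (c s)) \<sigma>)) has_real_derivative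
          DP f0 c' (lineP c' (mixP A (c 0) (c s)) s0)) (at s0)"
        unfolding Cd_def by (intro C1_line_deriv[OF f mixP_Omega[OF cO cO]])
    qed
    note tg = this
    have mf: "mixP Cd (c 0) (c s) = c s" unfolding Cd_def by (rule mixP_full[OF cO cO])
    show "\<exists>\<xi>. f0 (c s) - f0 (c 0) = (\<Sum>c'\<in>Cd. DP f0 c' (\<xi> c') * \<delta> s c') \<and>
      (\<forall>c'\<in>Cd. \<exists>A \<sigma>. A \<subseteq> Cd \<and> c' \<notin> A \<and> \<bar>\<sigma>\<bar> \<le> \<bar>\<delta> s c'\<bar> \<and> \<xi> c' = lineP c' (mixP A (c 0) (c s)) \<sigma>)"
      using tg unfolding mf mixP_empty .
  qed
  then obtain \<Xi> where \<Xi>eq: "\<And>s. f0 (c s) - f0 (c 0) = (\<Sum>c'\<in>Cd. DP f0 c' (\<Xi> s c') * \<delta> s c')"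
    and \<Xi>loc: "\<And>s c'. c' \<in> Cd \<Longrightarrow> \<exists>A \<sigma>. A \<subseteq> Cd \<and> c' \<notin> A \<and> \<bar>\<sigma>\<bar> \<le> \<bar>\<delta> s c'\<bar> \<and> \<Xi> s c' = lineP c' (mixP A (c 0) (c s)) \<sigma>"
    by (metis (no_types) choice)
  have \<Xi>O: "\<Xi> s c' \<in> Omega X" if cC: "c' \<in> Cd" for s c'
  proof -
    obtain A \<sigma> where "\<Xi> s c' = lineP c' (mixP A (c 0) (c s)) \<sigma>" using \<Xi>loc[OF cC, of s] by blast
    moreover have "lineP c' (mixP A (c 0) (c s)) \<sigma> \<in> Omega X"
      using cC unfolding Cd_def by (intro lineP_Omega mixP_Omega cO) auto
    ultimately show ?thesis by simp
  qed
  have \<Xi>d: "omega_dist X (\<Xi> s c') (c 0) \<le> omega_dist X (c s) (c 0)" if "c' \<in> Cd" for s c'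
    using \<Xi>loc[OF that, of s] mix_line_close unfolding \<delta>_def by metis
  have fstlim: "((\<lambda>s. fst (c s) k) \<longlongrightarrow> fst (c 0) k) (at 0)" if "k \<in> X" for k
    by (rule vec_tendstoI) (rule isCont_tendsto0[OF da[OF that]])
  have sndlim: "((\<lambda>s. snd (c s) k) \<longlongrightarrow> snd (c 0) k) (at 0)" if "k \<in> X" for k
    by (rule vec_tendstoI) (rule isCont_tendsto0[OF db[OF that]])
  have dist0: "((\<lambda>s. omega_dist X (c s) (c 0)) \<longlongrightarrow> 0) (at 0)"
  proof -
    have "((\<lambda>s. sqrt (\<Sum>k\<in>X. (norm (fst (c s) k - fst (c 0) k))\<^sup>2 + (norm (snd (c s) k - snd (c 0) k))\<^sup>2)) \<longlongrightarrow>
        sqrt (\<Sum>k\<in>X. (norm (fst (c 0) k - fst (c 0) k))\<^sup>2 + (norm (snd (c 0) k - snd (c 0) k))\<^sup>2)) (at 0)"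
      by (intro tendsto_intros fstlim sndlim)
    then show ?thesis by (simp add: omega_dist_def)
  qed
  have DPlim: "((\<lambda>s. DP f0 c' (\<Xi> s c')) \<longlongrightarrow> DP f0 c' (c 0)) (at 0)" if c': "c' \<in> Cd" for c'
  proof (rule tendstoI)
    fix e :: real assume e: "e > 0"
    obtain k i bb where cc: "c' = (k, i, bb)" by (cases c')
    have k: "k \<in> X" using c' cc by (simp add: Cd_def)
    have cont: "continuous_Omega X (DP f0 c')"
      using f k unfolding C1_Omega_def cc DP_def by (cases bb) auto
    obtain d where d: "d > 0" and dd: "\<And>w. w \<in> Omega X \<Longrightarrow> omega_dist X w (c 0) < d \<Longrightarrow> \<bar>DP f0 c' w - DP f0 c' (c 0)\<bar> < e"
      using cont cO[of 0] e unfolding continuous_Omega_def by blast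
    have "eventually (\<lambda>s. dist (omega_dist X (c s) (c 0)) 0 < d) (at 0)"
      using dist0 d by (rule tendstoD)
    then show "eventually (\<lambda>s. dist (DP f0 c' (\<Xi> s c')) (DP f0 c' (c 0)) < e) (at 0)"
    proof eventually_elim
      case (elim s)
      have "omega_dist X (\<Xi> s c') (c 0) < d"
        using \<Xi>d[OF c', of s] elim by (simp add: dist_real_def) 
      then show ?case using dd[OF \<Xi>O[OF c']] by (simp add: dist_real_def)
    qed
  qed
  have dlim: "((\<lambda>s. \<delta> s c' / s) \<longlongrightarrow> der c') (at 0)" if c': "c' \<in> Cd" for c'
  proof -
    obtain k i bb where cc: "c' = (k, i, bb)" by (cases c')
    have k: "k \<in> X" using c' cc by (simp add: Cd_def)
    show ?thesis
    proof (cases bb)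
      case True
      have "((\<lambda>h. (fst (c (0 + h)) k $ i - fst (c 0) k $ i) / h) \<longlongrightarrow> a k i) (at 0)"
        using da[OF k, of i] by (simp add: DERIV_def)
      then show ?thesis using True by (simp add: cc \<delta>_def der_def coordP_def)
    next
      case False
      have "((\<lambda>h. (snd (c (0 + h)) k $ i - snd (c 0) k $ i) / h) \<longlongrightarrow> b k i) (at 0)"
        using db[OF k, of i] by (simp add: DERIV_def)
      then show ?thesis using False by (simp add: cc \<delta>_def der_def coordP_def)
    qed
  qed
  have lim: "((\<lambda>s. \<Sum>c'\<in>Cd. DP f0 c' (\<Xi> s c') * (\<delta> s c' / s)) \<longlongrightarrow> (\<Sum>c'\<in>Cd. DP f0 c' (c 0) * der c')) (at 0)"
    by (intro tendsto_sum tendsto_mult DPlim dlim)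
  have ev: "eventually (\<lambda>s. (\<Sum>c'\<in>Cd. DP f0 c' (\<Xi> s c') * (\<delta> s c' / s)) = (f0 (c (0 + s)) - f0 (c 0)) / s) (at 0)"
  proof -
    have "(\<Sum>c'\<in>Cd. DP f0 c' (\<Xi> s c') * (\<delta> s c' / s)) = (f0 (c (0 + s)) - f0 (c 0)) / s" for s
      unfolding \<Xi>eq by (simp add: sum_divide_distrib)
    then show ?thesis by simp
  qed
  have "((\<lambda>s. (f0 (c (0 + s)) - f0 (c 0)) / s) \<longlongrightarrow> (\<Sum>c'\<in>Cd. DP f0 c' (c 0) * der c')) (at 0)"
    by (rule Lim_transform_eventually[OF lim ev])
  then have D: "((\<lambda>s. f0 (c s)) has_real_derivative (\<Sum>c'\<in>Cd. DP f0 c' (c 0) * der c')) (at 0)"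
    by (simp add: DERIV_def)
  have "(\<Sum>c'\<in>Cd. DP f0 c' (c 0) * der c') = (\<Sum>x\<in>X. \<Sum>i\<in>UNIV. dp f0 x i (c 0) * a x i + dq f0 x i (c 0) * b x i)"
    unfolding Cd_def sum_Cd[OF X] by (simp add: DP_def der_def)
  then show ?thesis using D by simp
qed

lemma proj_q_upd:
  "proj X (fst w, (snd w)(j := snd w j + s *\<^sub>R v)) =
    (if j \<in> X then (fst (proj X w), (snd (proj X w))(j := snd (proj X w) j + s *\<^sub>R v)) else proj X w)"
  by (auto simp: proj_def fun_eq_iff)

lemma proj_p_upd:
  "proj X ((fst w)(j := fst w j + s *\<^sub>R v), snd w) =
    (if j \<in> X then ((fst (proj X w))(j := fst (proj X w) j + s *\<^sub>R v), snd (proj X w)) else proj X w)"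
  by (auto simp: proj_def fun_eq_iff)

lemma deriv_const0: "deriv (\<lambda>s::real. c::real) 0 = 0"
  by (rule DERIV_imp_deriv) (rule DERIV_const)

lemma dq_proj: "dq (\<lambda>w. f0 (proj X w)) j i w = (if j \<in> X then dq f0 j i (proj X w) else 0)"
  unfolding dq_def proj_q_upd by (cases "j \<in> X") (simp_all add: deriv_const0)

lemma dp_proj: "dp (\<lambda>w. f0 (proj X w)) j i w = (if j \<in> X then dp f0 j i (proj X w) else 0)"
  unfolding dp_def proj_p_upd by (cases "j \<in> X") (simp_all add: deriv_const0)

lemma grad_norm_proj:
  assumes "finite L" "X \<subseteq> L"
  shows "grad_norm L (\<lambda>w. f0 (proj X w)) w = grad_norm X f0 (proj X w)"
proof -
  have "(\<Sum>j\<in>L. \<Sum>i\<in>UNIV. (dq (\<lambda>w. f0 (proj X w)) j i w)\<^sup>2 + (dp (\<lambda>w. f0 (proj X w)) j i w)\<^sup>2)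
      = (\<Sum>j\<in>X. \<Sum>i\<in>UNIV. (dq f0 j i (proj X w))\<^sup>2 + (dp f0 j i (proj X w))\<^sup>2)"
    unfolding dq_proj dp_proj
    by (rule sum.mono_neutral_cong_right) (use assms in auto)
  then show ?thesis by (simp add: grad_norm_def)
qed

lemma proj_Omega: "proj X w \<in> Omega X"
  by (simp add: proj_def Omega_def)

lemma proj_id: "w \<in> Omega X \<Longrightarrow> proj X w = w"
  by (auto simp: proj_def Omega_def prod_eq_iff fun_eq_iff)

lemma Omega_mono: "X \<subseteq> L \<Longrightarrow> Omega X \<subseteq> Omega L"
  by (auto simp: Omega_def)

lemma zero_Omega: "((\<lambda>k. 0), (\<lambda>k. 0)) \<in> Omega L"
  by (simp add: Omega_def)

lemma grad_comp_le: "\<bar>dq h j i z\<bar> \<le> grad_norm L h z \<and> \<bar>dp h j i z\<bar> \<le> grad_norm L h z" if "finite L" "j \<in> L"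
proof -
  have a: "(dq h j i z)\<^sup>2 + (dp h j i z)\<^sup>2 \<le> (\<Sum>i\<in>UNIV. (dq h j i z)\<^sup>2 + (dp h j i z)\<^sup>2)"
    by (rule member_le_sum) auto
  have b: "(\<Sum>i\<in>UNIV. (dq h j i z)\<^sup>2 + (dp h j i z)\<^sup>2) \<le> (\<Sum>j\<in>L. \<Sum>i\<in>UNIV. (dq h j i z)\<^sup>2 + (dp h j i z)\<^sup>2)"
    by (rule member_le_sum[OF that(2)]) (auto intro: sum_nonneg simp: that(1))
  define T where "T = (\<Sum>j\<in>L. \<Sum>i\<in>UNIV. (dq h j i z)\<^sup>2 + (dp h j i z)\<^sup>2)"
  have T0: "0 \<le> T" unfolding T_def by (intro sum_nonneg add_nonneg_nonneg) auto
  have gT: "(grad_norm L h z)\<^sup>2 = T" using T0 by (simp add: grad_norm_def T_def)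
  have g0: "0 \<le> grad_norm L h z" using T0 by (simp add: grad_norm_def T_def)
  have "(\<bar>dq h j i z\<bar>)\<^sup>2 \<le> (grad_norm L h z)\<^sup>2" "(\<bar>dp h j i z\<bar>)\<^sup>2 \<le> (grad_norm L h z)\<^sup>2"
    using a b zero_le_power2[of "dp h j i z"] zero_le_power2[of "dq h j i z"] unfolding gT T_def power2_abs by linarith+
  then show ?thesis using g0 by (auto intro: power2_le_imp_le)
qed

lemma C1_norm_bounds:
  fixes f0 :: "'d::finite phase \<Rightarrow> real"
  assumes L: "finite L" and XL: "X \<subseteq> L" and f0: "C1b_Omega X f0"
  defines "f \<equiv> (\<lambda>w. f0 (proj X w))"
  shows "\<And>j i w. j \<in> L \<Longrightarrow> \<bar>dq f j i w\<bar> \<le> C1_norm L f"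
    and "\<And>j i w. j \<in> L \<Longrightarrow> \<bar>dp f j i w\<bar> \<le> C1_norm L f"
    and "0 \<le> C1_norm L f"
proof -
  have X: "finite X" using L XL finite_subset by blast
  obtain B1 where B1: "\<And>w. w \<in> Omega X \<Longrightarrow> \<bar>f0 w\<bar> \<le> B1"
    using f0 unfolding C1b_Omega_def bdd_above_def by auto
  obtain B2 where B2: "\<And>w. w \<in> Omega X \<Longrightarrow> grad_norm X f0 w \<le> B2"
    using f0 unfolding C1b_Omega_def bdd_above_def by auto
  have bdd1: "bdd_above ((\<lambda>z. \<bar>f z\<bar>) ` Omega L)"
    using B1 proj_Omega unfolding f_def bdd_above_def by blast
  have bdd2: "bdd_above (grad_norm L f ` Omega L)"
    using B2 proj_Omega unfolding f_def grad_norm_proj[OF L XL] bdd_above_def by blast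
  have ne: "Omega L \<noteq> {}" using zero_Omega by blast
  have s1: "0 \<le> (SUP z\<in>Omega L. \<bar>f z\<bar>)"
    using cSUP_upper[OF zero_Omega bdd1] by (smt (verit) abs_ge_zero)
  have gpos: "0 \<le> grad_norm L f w" for w unfolding grad_norm_def by (intro real_sqrt_ge_zero sum_nonneg add_nonneg_nonneg) auto
  have s2: "grad_norm L f w \<le> (SUP z\<in>Omega L. grad_norm L f z)" for w
  proof -
    have "grad_norm L f w = grad_norm L f (proj X w)"
      unfolding f_def grad_norm_proj[OF L XL] by (simp add: proj_id proj_Omega)
    also have "\<dots> \<le> (SUP z\<in>Omega L. grad_norm L f z)"
      by (rule cSUP_upper[OF _ bdd2]) (use proj_Omega Omega_mono[OF XL] in blast)
    finally show ?thesis .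
  qed
  show "0 \<le> C1_norm L f" unfolding C1_norm_def using s1 s2[of undefined] gpos[of undefined] by linarith
  fix j i w assume j: "j \<in> L"
  show "\<bar>dq f j i w\<bar> \<le> C1_norm L f"
    using grad_comp_le[OF L j, of f i w] s2[of w] s1 unfolding C1_norm_def by linarith
  show "\<bar>dp f j i w\<bar> \<le> C1_norm L f"
    using grad_comp_le[OF L j, of f i w] s2[of w] s1 unfolding C1_norm_def by linarith
qed

context hsys
begin

lemma dflow_line:
  fixes f0 :: "'d phase \<Rightarrow> real"
  assumes XL: "X \<subseteq> L" and f0: "C1_Omega X f0"
    and Gf: "\<And>x i w. x \<in> X \<Longrightarrow> w \<in> Omega X \<Longrightarrow> \<bar>dp f0 x i w\<bar> \<le> Gf \<and> \<bar>dq f0 x i w\<bar> \<le> Gf"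
    and Gf0: "0 \<le> Gf" and z: "z \<in> Omega L" and j: "j \<in> L"
  shows "\<exists>D. ((\<lambda>s. f0 (proj X (\<Phi> t (lineP (j, i, b) z s)))) has_real_derivative D) (at 0) \<and>
     \<bar>D\<bar> \<le> 2 * real CARD('d) * Gf * (\<Sum>x\<in>X. (if x = j then 1 else 0) + (exp (\<kappa> * CF * \<bar>t\<bar>) - 1) / CF * w x j)"
proof -
  have X: "finite X" using finL XL finite_subset by blast
  define zs where "zs s = lineP (j, i, b) z s" for s
  define E where "E l = (if l = j then (if b then (axis i 1, 0) else (0, axis i 1)) else (0 :: (real^'d) \<times> (real^'d)))" for l
  have zsO: "zs s \<in> Omega L" for s unfolding zs_def using j by (intro lineP_Omega z) auto
  have zs0: "zs 0 = z" by (simp add: zs_def lineP0)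
  have zsE: "site (zs s) l - site z l = s *\<^sub>R E l" for s l
    by (cases b) (auto simp: zs_def lineP_def site_def E_def zero_prod_def)
  have En: "norm (E l) \<le> (if l = j then 1 else 0)" for l
    by (cases b) (auto simp: E_def norm_axis_1 norm_Pair)
  obtain v where v: "\<And>k. k \<in> L \<Longrightarrow> ((\<lambda>s. (1/s) *\<^sub>R (site (\<Phi> t (zs s)) k - site (\<Phi> t z) k)) \<longlongrightarrow> v k) (at 0)"
     and vb: "\<And>k. k \<in> L \<Longrightarrow> norm (v k) \<le> (if k = j then 1 else 0) + (exp (\<kappa> * CF * \<bar>t\<bar>) - 1) / CF * w k j"
    using flow_deriv[OF z j zsO zs0 zsE En] by blast
  define c where "c s = proj X (\<Phi> t (zs s))" for s
  have cO: "c s \<in> Omega X" for s by (simp add: c_def proj_Omega)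
  have c0: "c 0 = proj X (\<Phi> t z)" by (simp add: c_def zs0)
  have da: "((\<lambda>s. fst (c s) x $ i') has_real_derivative fst (v x) $ i') (at 0)"
   and db: "((\<lambda>s. snd (c s) x $ i') has_real_derivative snd (v x) $ i') (at 0)" if x: "x \<in> X" for x i'
  proof -
    have xL: "x \<in> L" using x XL by auto
    have l1: "((\<lambda>s. fst ((1/s) *\<^sub>R (site (\<Phi> t (zs s)) x - site (\<Phi> t z) x)) $ i') \<longlongrightarrow> fst (v x) $ i') (at 0)"
      by (intro tendsto_vec_nth tendsto_fst v[OF xL])
    have l2: "((\<lambda>s. snd ((1/s) *\<^sub>R (site (\<Phi> t (zs s)) x - site (\<Phi> t z) x)) $ i') \<longlongrightarrow> snd (v x) $ i') (at 0)"
      by (intro tendsto_vec_nth tendsto_snd v[OF xL])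
    show "((\<lambda>s. fst (c s) x $ i') has_real_derivative fst (v x) $ i') (at 0)"
      unfolding DERIV_def using l1 x zs0 by (simp add: c_def proj_def site_def divide_inverse mult.commute)
    show "((\<lambda>s. snd (c s) x $ i') has_real_derivative snd (v x) $ i') (at 0)"
      unfolding DERIV_def using l2 x zs0 by (simp add: c_def proj_def site_def divide_inverse mult.commute)
  qed
  have D: "((\<lambda>s. f0 (c s)) has_real_derivative
     (\<Sum>x\<in>X. \<Sum>i'\<in>UNIV. dp f0 x i' (c 0) * fst (v x) $ i' + dq f0 x i' (c 0) * snd (v x) $ i')) (at 0)"
    by (rule chain_C1[OF X f0 cO da db])
  have "\<bar>\<Sum>x\<in>X. \<Sum>i'\<in>UNIV. dp f0 x i' (c 0) * fst (v x) $ i' + dq f0 x i' (c 0) * snd (v x) $ i'\<bar>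
      \<le> (\<Sum>x\<in>X. \<Sum>i'\<in>(UNIV::'d set). 2 * Gf * norm (v x))"
  proof (rule order_trans[OF sum_abs sum_mono], rule order_trans[OF sum_abs sum_mono])
    fix x i' assume x: "x \<in> X"
    have g: "\<bar>dp f0 x i' (c 0)\<bar> \<le> Gf" "\<bar>dq f0 x i' (c 0)\<bar> \<le> Gf" using Gf[OF x cO] by auto
    have n1: "\<bar>fst (v x) $ i'\<bar> \<le> norm (v x)"
      using component_le_norm_cart[of "fst (v x)" i'] norm_fst_le[where x="fst (v x)" and y="snd (v x)"] by simp
    have n2: "\<bar>snd (v x) $ i'\<bar> \<le> norm (v x)"
      using component_le_norm_cart[of "snd (v x)" i'] norm_snd_le[where x="fst (v x)" and y="snd (v x)"] by simp
    have "\<bar>dp f0 x i' (c 0) * fst (v x) $ i'\<bar> \<le> Gf * norm (v x)"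
      unfolding abs_mult by (rule mult_mono[OF g(1) n1]) (use Gf0 in auto)
    moreover have "\<bar>dq f0 x i' (c 0) * snd (v x) $ i'\<bar> \<le> Gf * norm (v x)"
      unfolding abs_mult by (rule mult_mono[OF g(2) n2]) (use g in auto)
    ultimately show "\<bar>dp f0 x i' (c 0) * fst (v x) $ i' + dq f0 x i' (c 0) * snd (v x) $ i'\<bar> \<le> 2 * Gf * norm (v x)"
      by linarith
  qed
  also have "\<dots> = 2 * real CARD('d) * Gf * (\<Sum>x\<in>X. norm (v x))"
    by (simp add: sum_distrib_left algebra_simps)
  also have "\<dots> \<le> 2 * real CARD('d) * Gf * (\<Sum>x\<in>X. (if x = j then 1 else 0) + (exp (\<kappa> * CF * \<bar>t\<bar>) - 1) / CF * w x j)"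
  proof (rule mult_left_mono)
    show "(\<Sum>x\<in>X. norm (v x)) \<le> (\<Sum>x\<in>X. (if x = j then 1 else 0) + (exp (\<kappa> * CF * \<bar>t\<bar>) - 1) / CF * w x j)"
      using vb XL by (intro sum_mono) (simp add: subset_iff)
    show "0 \<le> 2 * real CARD('d) * Gf" using Gf0 by simp
  qed
  finally show ?thesis unfolding c_def zs_def using D unfolding c_def zs_def by blast
qed

lemma dflow_bounds:
  fixes f0 :: "'d phase \<Rightarrow> real" and t :: real
  assumes XL: "X \<subseteq> L" and f0: "C1b_Omega X f0" and z: "z \<in> Omega L" and j: "j \<in> L"
  defines "Fq \<equiv> (\<lambda>w. f0 (proj X (\<Phi> t w)))"
  defines "B \<equiv> 2 * real CARD('d) * C1_norm L (\<lambda>w. f0 (proj X w)) *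
      (\<Sum>x\<in>X. (if x = j then 1 else 0) + (exp (\<kappa> * CF * \<bar>t\<bar>) - 1) / CF * w x j)"
  shows "\<bar>dq Fq j i z\<bar> \<le> B" and "\<bar>dp Fq j i z\<bar> \<le> B"
proof -
  let ?f = "\<lambda>w. f0 (proj X w)"
  have f1: "C1_Omega X f0" using f0 by (simp add: C1b_Omega_def)
  have Gf: "\<bar>dp f0 x i w\<bar> \<le> C1_norm L ?f \<and> \<bar>dq f0 x i w\<bar> \<le> C1_norm L ?f" if x: "x \<in> X" and w: "w \<in> Omega X" for x i w
  proof -
    have xL: "x \<in> L" using x XL by auto
    have "dp f0 x i w = dp ?f x i w" "dq f0 x i w = dq ?f x i w"
      using x w by (simp_all add: dp_proj dq_proj proj_id)
    then show ?thesis using C1_norm_bounds(1,2)[OF finL XL f0 xL] by metis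
  qed
  have Gf0: "0 \<le> C1_norm L ?f" by (rule C1_norm_bounds(3)[OF finL XL f0])
  obtain D1 where D1: "((\<lambda>s. f0 (proj X (\<Phi> t (lineP (j, i, False) z s)))) has_real_derivative D1) (at 0)" "\<bar>D1\<bar> \<le> B"
    using dflow_line[OF XL f1 Gf Gf0 z j, of t i False] unfolding B_def by blast
  obtain D2 where D2: "((\<lambda>s. f0 (proj X (\<Phi> t (lineP (j, i, True) z s)))) has_real_derivative D2) (at 0)" "\<bar>D2\<bar> \<le> B"
    using dflow_line[OF XL f1 Gf Gf0 z j, of t i True] unfolding B_def by blast
  have "dq Fq j i z = D1" unfolding dq_def Fq_def using DERIV_imp_deriv[OF D1(1)] by (simp add: lineP_def)
  then show "\<bar>dq Fq j i z\<bar> \<le> B" using D1(2) by simp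
  have "dp Fq j i z = D2" unfolding dp_def Fq_def using DERIV_imp_deriv[OF D2(1)] by (simp add: lineP_def)
  then show "\<bar>dp Fq j i z\<bar> \<le> B" using D2(2) by simp
qed

lemma poisson_bound:
  fixes f0 g0 :: "'d phase \<Rightarrow> real"
  assumes XL: "X \<subseteq> L" and YL: "Y \<subseteq> L" and disj: "\<And>x y. x \<in> X \<Longrightarrow> y \<in> Y \<Longrightarrow> x \<noteq> y"
    and f0: "C1b_Omega X f0" and g0: "C1b_Omega Y g0" and z: "z \<in> Omega L"
  shows "\<bar>poisson L (\<lambda>w. f0 (proj X (\<Phi> t w))) (\<lambda>w. g0 (proj Y w)) z\<bar>
     \<le> 4 * real CARD('d) ^ 2 * C1_norm L (\<lambda>w. f0 (proj X w)) * C1_norm L (\<lambda>w. g0 (proj Y w)) *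
        ((exp (\<kappa> * CF * \<bar>t\<bar>) - 1) / CF) * (\<Sum>x\<in>X. \<Sum>y\<in>Y. w x y)"
proof -
  let ?F = "\<lambda>w. f0 (proj X (\<Phi> t w))" and ?g = "\<lambda>w. g0 (proj Y w)" and ?f = "\<lambda>w. f0 (proj X w)"
  define d where "d = real CARD('d)"
  define A where "A = (exp (\<kappa> * CF * \<bar>t\<bar>) - 1) / CF"
  define Gf where "Gf = C1_norm L ?f"
  define Gg where "Gg = C1_norm L ?g"
  have A0: "0 \<le> A" using \<kappa> CF by (simp add: A_def)
  have Gf0: "0 \<le> Gf" unfolding Gf_def by (rule C1_norm_bounds(3)[OF finL XL f0])
  have Gg0: "0 \<le> Gg" unfolding Gg_def by (rule C1_norm_bounds(3)[OF finL YL g0])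
  have X: "finite X" "finite Y" using finL XL YL finite_subset by blast+
  have tm: "\<bar>dq ?F j i z * dp ?g j i z - dp ?F j i z * dq ?g j i z\<bar>
      \<le> (if j \<in> Y then 2 * (2 * d * Gf * (A * (\<Sum>x\<in>X. w x j))) * Gg else 0)" if j: "j \<in> L" for j i
  proof (cases "j \<in> Y")
    case False
    then show ?thesis by (simp add: dp_proj dq_proj)
  next
    case True
    have sX: "(\<Sum>x\<in>X. (if x = j then 1 else 0) + A * w x j) = A * (\<Sum>x\<in>X. w x j)"
      using disj[OF _ True] by (simp add: sum_distrib_left)
    have bF: "\<bar>dq ?F j i z\<bar> \<le> 2 * d * Gf * (A * (\<Sum>x\<in>X. w x j))" "\<bar>dp ?F j i z\<bar> \<le> 2 * d * Gf * (A * (\<Sum>x\<in>X. w x j))"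
      using dflow_bounds[OF XL f0 z j, of t i] sX unfolding d_def Gf_def A_def
      by (simp_all add: mult.commute[of _ "w _ j"])
    have bg: "\<bar>dq ?g j i z\<bar> \<le> Gg" "\<bar>dp ?g j i z\<bar> \<le> Gg"
      using C1_norm_bounds(1,2)[OF finL YL g0 j] unfolding Gg_def by auto
    have B0: "0 \<le> 2 * d * Gf * (A * (\<Sum>x\<in>X. w x j))"
      using Gf0 A0 wnn XL j by (auto simp: d_def intro!: sum_nonneg mult_nonneg_nonneg)
    have "\<bar>dq ?F j i z * dp ?g j i z - dp ?F j i z * dq ?g j i z\<bar>
        \<le> \<bar>dq ?F j i z\<bar> * \<bar>dp ?g j i z\<bar> + \<bar>dp ?F j i z\<bar> * \<bar>dq ?g j i z\<bar>"
      by (simp add: abs_mult[symmetric] abs_triangle_ineq4)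
    also have "\<dots> \<le> (2 * d * Gf * (A * (\<Sum>x\<in>X. w x j))) * Gg + (2 * d * Gf * (A * (\<Sum>x\<in>X. w x j))) * Gg"
      by (intro add_mono mult_mono bF bg B0) auto
    finally show ?thesis using True by (simp add: ac_simps)
  qed
  have "\<bar>poisson L ?F ?g z\<bar> \<le> (\<Sum>j\<in>L. \<Sum>i\<in>(UNIV::'d set). (if j \<in> Y then 2 * (2 * d * Gf * (A * (\<Sum>x\<in>X. w x j))) * Gg else 0))"
    unfolding poisson_def
    by (rule order_trans[OF sum_abs sum_mono], rule order_trans[OF sum_abs sum_mono]) (rule tm)
  also have "\<dots> = (\<Sum>j\<in>L. if j \<in> Y then d * (2 * (2 * d * Gf * (A * (\<Sum>x\<in>X. w x j))) * Gg) else 0)"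
    by (rule sum.cong[OF refl]) (simp add: d_def)
  also have "\<dots> = (\<Sum>j\<in>Y. d * (2 * (2 * d * Gf * (A * (\<Sum>x\<in>X. w x j))) * Gg))"
    using finL YL by (simp add: sum.If_cases Int_absorb1)
  also have "\<dots> = 4 * d^2 * Gf * Gg * A * (\<Sum>j\<in>Y. \<Sum>x\<in>X. w x j)"
    by (simp add: sum_distrib_left power2_eq_square algebra_simps)
  also have "(\<Sum>j\<in>Y. \<Sum>x\<in>X. w x j) = (\<Sum>x\<in>X. \<Sum>y\<in>Y. w x y)" by (rule sum.swap)
  finally show ?thesis unfolding d_def Gf_def Gg_def A_def .
qed

end

lemma sinh_real_expr: "sinh (a::real) = (exp a - exp (- a)) / 2"
  by (simp add: sinh_def)

lemma expm1_le_2sinh: "0 \<le> (a::real) \<Longrightarrow> exp a - 1 \<le> 2 * sinh a"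
  unfolding sinh_real_expr by simp

lemma sinh_le_expm1: "0 \<le> (a::real) \<Longrightarrow> sinh a \<le> exp a - 1"
proof -
  assume a: "0 \<le> a"
  have "2 \<le> exp a + exp (- a)"
  proof -
    have "0 \<le> (exp (a/2) - exp (- a/2))^2" by simp
    also have "\<dots> = exp a + exp (- a) - 2"
      by (simp add: power2_eq_square algebra_simps exp_add[symmetric])
    finally show ?thesis by simp
  qed
  then show ?thesis unfolding sinh_real_expr by simp
qed

lemma final_arith:
  fixes u kc CF dd R :: real
  assumes u: "0 \<le> u" and kc: "0 \<le> kc" and CF: "0 < CF" and dd: "0 \<le> dd"
    and R1: "kc \<le> R" and R2: "2 * dd / CF \<le> R"
  shows "dd * ((exp (kc * u) - 1) / CF) \<le> R * sinh (R * u)"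
proof -
  have R0: "0 \<le> R" using R1 kc by linarith
  have a0: "0 \<le> kc * u" using kc u by simp
  have "dd * ((exp (kc * u) - 1) / CF) = (dd / CF) * (exp (kc * u) - 1)" by simp
  also have "\<dots> \<le> (dd / CF) * (2 * sinh (kc * u))"
    by (rule mult_left_mono[OF expm1_le_2sinh[OF a0]]) (use dd CF in simp)
  also have "\<dots> = (2 * dd / CF) * sinh (kc * u)" by simp
  also have "\<dots> \<le> R * sinh (kc * u)"
    by (rule mult_right_mono[OF R2]) (use a0 in simp)
  also have "\<dots> \<le> R * sinh (R * u)"
    by (rule mult_left_mono) (use R0 R1 u mult_right_mono in auto)
  finally show ?thesis .
qed

theorem theorem3p9:
  "\<exists>C0 :: real \<Rightarrow> real \<Rightarrow> real \<Rightarrow> real \<Rightarrow> real \<Rightarrow> real \<Rightarrow> real.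
   \<forall>(\<Gamma>::nat set) (\<rho>::nat \<Rightarrow> nat \<Rightarrow> real) (F::real \<Rightarrow> real) (CF::real)
    (m::nat \<Rightarrow> real) (\<nu>::nat \<Rightarrow> real) (V::nat \<Rightarrow> nat \<Rightarrow> real^'d::finite \<Rightarrow> real)
    (CV::real) (C::nat \<Rightarrow> nat \<Rightarrow> real).
   ((\<forall>x\<in>\<Gamma>. \<forall>y\<in>\<Gamma>. 0 \<le> \<rho> x y \<and> (\<rho> x y = 0 \<longleftrightarrow> x = y) \<and> \<rho> x y = \<rho> y x)
    \<and> (\<forall>x\<in>\<Gamma>. \<forall>y\<in>\<Gamma>. \<forall>z\<in>\<Gamma>. \<rho> x z \<le> \<rho> x y + \<rho> y z)
    \<and> (\<forall>r\<ge>0. F r > 0) \<and> F 0 = 1 \<and> (\<forall>r s. 0 \<le> r \<longrightarrow> r \<le> s \<longrightarrow> F s \<le> F r)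
    \<and> (\<forall>y\<in>\<Gamma>. (\<lambda>x. F (\<rho> x y)) summable_on \<Gamma>)
    \<and> bdd_above ((\<lambda>y. \<Sum>\<^sub>\<infinity>x\<in>\<Gamma>. F (\<rho> x y)) ` \<Gamma>)
    \<and> CF > 0
    \<and> (\<forall>x\<in>\<Gamma>. \<forall>y\<in>\<Gamma>. (\<lambda>z. F (\<rho> x z) * F (\<rho> z y)) summable_on \<Gamma>
          \<and> (\<Sum>\<^sub>\<infinity>z\<in>\<Gamma>. F (\<rho> x z) * F (\<rho> z y)) \<le> CF * F (\<rho> x y))
    \<and> (\<forall>k\<in>\<Gamma>. m k > 0 \<and> \<nu> k > 0)
    \<and> (\<exists>c>0. \<forall>k\<in>\<Gamma>. c \<le> 1 / m k) \<and> bdd_above ((\<lambda>k. 1 / m k) ` \<Gamma>)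
    \<and> (\<exists>c>0. \<forall>k\<in>\<Gamma>. c \<le> \<nu> k) \<and> bdd_above (\<nu> ` \<Gamma>)
    \<and> CV \<ge> 0
    \<and> (\<forall>k\<in>\<Gamma>. \<forall>l\<in>\<Gamma>. smooth_fun (V k l) \<and> (\<forall>x. V k l x = V l k (- x)) \<and> C k l > 0
          \<and> (\<forall>\<beta> x. \<bar>partial_iter \<beta> (V k l) x\<bar> \<le> C k l * CV ^ length \<beta>))
    \<and> (\<forall>k\<in>\<Gamma>. V k k = (\<lambda>x. 0))
    \<and> bdd_above ((\<lambda>(k, l). C k l / F (\<rho> k l)) ` (\<Gamma> \<times> \<Gamma>)))
   \<longrightarrow>
   (let C0v = C0 CV (SUP (k, l)\<in>\<Gamma> \<times> \<Gamma>. C k l / F (\<rho> k l))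
                 (SUP y\<in>\<Gamma>. \<Sum>\<^sub>\<infinity>x\<in>\<Gamma>. F (\<rho> x y)) CF
                 (SUP k\<in>\<Gamma>. 1 / m k) (SUP k\<in>\<Gamma>. \<nu> k)
    in C0v > 0 \<and>
     (\<forall>X Y L (f0 :: 'd phase \<Rightarrow> real) (g0 :: 'd phase \<Rightarrow> real) (\<Phi> :: real \<Rightarrow> 'd phase \<Rightarrow> 'd phase) t.
        finite X \<and> finite Y \<and> (\<forall>x\<in>X. \<forall>y\<in>Y. \<rho> x y > 0)
        \<and> finite L \<and> L \<subseteq> \<Gamma> \<and> X \<union> Y \<subseteq> L
        \<and> C1b_Omega X f0 \<and> C1b_Omega Y g0
        \<and> is_ham_flow L (hamiltonian L m \<nu> V) \<Phi>
      \<longrightarrow>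
        (let f = (\<lambda>z. f0 (proj X z)); g = (\<lambda>z. g0 (proj Y z));
             D = (\<Sum>x\<in>X. \<Sum>y\<in>Y. F (\<rho> x y))
         in \<forall>z\<in>Omega L.
              \<bar>poisson L (\<lambda>w. f (\<Phi> t w)) g z\<bar>
                \<le> 4 * C1_norm L f * C1_norm L g * sqrt C0v * sinh (sqrt C0v * \<bar>t\<bar>) * D
            \<and> \<bar>poisson L (\<lambda>w. f (\<Phi> t w)) g z\<bar>
                \<le> 4 * C1_norm L f * C1_norm L g * sqrt C0v * (exp (sqrt C0v * \<bar>t\<bar>) - 1) * D)))"
proof -
  define dd where "dd = real CARD('d) ^ 2"
  have dd0: "0 \<le> dd" by (simp add: dd_def)
  define kap where "kap CV Ps Ss sm sn = 2 * (\<bar>sn\<bar> + \<bar>sm\<bar> + dd * \<bar>Ps\<bar> * CV^2 * (\<bar>Ss\<bar> + 1))"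
    for CV Ps Ss sm sn :: real
  define Rf where "Rf CV Ps Ss CF sm sn = 1 + \<bar>kap CV Ps Ss sm sn * CF\<bar> + 2 * dd / \<bar>CF\<bar>"
    for CV Ps Ss CF sm sn :: real
  define C0 where "C0 CV Ps Ss CF sm sn = (Rf CV Ps Ss CF sm sn)^2" for CV Ps Ss CF sm sn :: real
  have Rf1: "1 \<le> Rf CV Ps Ss CF sm sn" for CV Ps Ss CF sm sn
    using dd0 by (simp add: Rf_def)
  show ?thesis
  proof (rule exI[of _ C0], intro allI impI, elim conjE)
    fix \<Gamma> :: "nat set" and \<rho> :: "nat \<Rightarrow> nat \<Rightarrow> real" and F :: "real \<Rightarrow> real" and CF :: real
      and m \<nu> :: "nat \<Rightarrow> real" and V :: "nat \<Rightarrow> nat \<Rightarrow> real^'d \<Rightarrow> real" and CV :: real and C :: "nat \<Rightarrow> nat \<Rightarrow> real"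
    assume h1: "\<forall>x\<in>\<Gamma>. \<forall>y\<in>\<Gamma>. 0 \<le> \<rho> x y \<and> (\<rho> x y = 0 \<longleftrightarrow> x = y) \<and> \<rho> x y = \<rho> y x"
      and h2: "\<forall>x\<in>\<Gamma>. \<forall>y\<in>\<Gamma>. \<forall>z\<in>\<Gamma>. \<rho> x z \<le> \<rho> x y + \<rho> y z"
      and h3: "\<forall>r\<ge>0. F r > 0" and F0: "F 0 = 1" and h5: "\<forall>r s. 0 \<le> r \<longrightarrow> r \<le> s \<longrightarrow> F s \<le> F r"
      and h6: "\<forall>y\<in>\<Gamma>. (\<lambda>x. F (\<rho> x y)) summable_on \<Gamma>"
      and bddS: "bdd_above ((\<lambda>y. \<Sum>\<^sub>\<infinity>x\<in>\<Gamma>. F (\<rho> x y)) ` \<Gamma>)"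
      and CF: "CF > 0"
      and h9: "\<forall>x\<in>\<Gamma>. \<forall>y\<in>\<Gamma>. (\<lambda>z. F (\<rho> x z) * F (\<rho> z y)) summable_on \<Gamma>
          \<and> (\<Sum>\<^sub>\<infinity>z\<in>\<Gamma>. F (\<rho> x z) * F (\<rho> z y)) \<le> CF * F (\<rho> x y)"
      and h10: "\<forall>k\<in>\<Gamma>. m k > 0 \<and> \<nu> k > 0"
      and h11: "\<exists>c>0. \<forall>k\<in>\<Gamma>. c \<le> 1 / m k" and bddm: "bdd_above ((\<lambda>k. 1 / m k) ` \<Gamma>)"
      and h13: "\<exists>c>0. \<forall>k\<in>\<Gamma>. c \<le> \<nu> k" and bddnu: "bdd_above (\<nu> ` \<Gamma>)"
      and h15: "CV \<ge> 0"
      and h16: "\<forall>k\<in>\<Gamma>. \<forall>l\<in>\<Gamma>. smooth_fun (V k l) \<and> (\<forall>x. V k l x = V l k (- x)) \<and> C k l > 0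
          \<and> (\<forall>\<beta> x. \<bar>partial_iter \<beta> (V k l) x\<bar> \<le> C k l * CV ^ length \<beta>)"
      and h17: "\<forall>k\<in>\<Gamma>. V k k = (\<lambda>x. 0)"
      and bddC: "bdd_above ((\<lambda>(k, l). C k l / F (\<rho> k l)) ` (\<Gamma> \<times> \<Gamma>))"
    have rho: "0 \<le> \<rho> x y \<and> (\<rho> x y = 0 \<longleftrightarrow> x = y) \<and> \<rho> x y = \<rho> y x" if "x \<in> \<Gamma>" "y \<in> \<Gamma>" for x y
      using h1 that by blast
    have Fpos: "F r > 0" if "0 \<le> r" for r using h3 that by blast
    have summ: "(\<lambda>x. F (\<rho> x y)) summable_on \<Gamma>" if "y \<in> \<Gamma>" for y using h6 that by blast
    have conv: "(\<lambda>z. F (\<rho> x z) * F (\<rho> z y)) summable_on \<Gamma>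
          \<and> (\<Sum>\<^sub>\<infinity>z\<in>\<Gamma>. F (\<rho> x z) * F (\<rho> z y)) \<le> CF * F (\<rho> x y)" if "x \<in> \<Gamma>" "y \<in> \<Gamma>" for x y
      using h9 that by blast
    have mnu: "m k > 0 \<and> \<nu> k > 0" if "k \<in> \<Gamma>" for k using h10 that by blast
    have Vh: "smooth_fun (V k l) \<and> (\<forall>x. V k l x = V l k (- x)) \<and> C k l > 0
          \<and> (\<forall>\<beta> x. \<bar>partial_iter \<beta> (V k l) x\<bar> \<le> C k l * CV ^ length \<beta>)" if "k \<in> \<Gamma>" "l \<in> \<Gamma>" for k l
      using h16 that by blast
    define Ps where "Ps = (SUP (k, l)\<in>\<Gamma> \<times> \<Gamma>. C k l / F (\<rho> k l))"
    define Ss where "Ss = (SUP y\<in>\<Gamma>. \<Sum>\<^sub>\<infinity>x\<in>\<Gamma>. F (\<rho> x y))"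
    define sm where "sm = (SUP k\<in>\<Gamma>. 1 / m k)"
    define sn where "sn = (SUP k\<in>\<Gamma>. \<nu> k)"
    define \<kappa> where "\<kappa> = kap CV Ps Ss sm sn"
    define R where "R = Rf CV Ps Ss CF sm sn"
    have R1: "1 \<le> R" unfolding R_def by (rule Rf1)
    have sqC0: "sqrt (C0 CV Ps Ss CF sm sn) = R" using R1 by (simp add: C0_def R_def)
    have \<kappa>0: "0 \<le> \<kappa>" using dd0 by (simp add: \<kappa>_def kap_def)
    have Fr: "0 < F (\<rho> x y)" if "x \<in> \<Gamma>" "y \<in> \<Gamma>" for x y
    proof -
      have "0 \<le> \<rho> x y" using rho[OF that] by simp
      then show ?thesis by (rule Fpos)
    qed
    have Frr: "F (\<rho> k k) = 1" if "k \<in> \<Gamma>" for k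
    proof -
      have "\<rho> k k = 0" using rho[OF that that] by simp
      then show ?thesis using F0 by simp
    qed
    have Cle: "C k l \<le> \<bar>Ps\<bar> * F (\<rho> k l)" if "k \<in> \<Gamma>" "l \<in> \<Gamma>" for k l
    proof -
      have "C k l / F (\<rho> k l) \<le> Ps"
        unfolding Ps_def using cSUP_upper[OF _ bddC, of "(k, l)"] that by simp
      then have "C k l \<le> Ps * F (\<rho> k l)" using Fr[OF that] by (simp add: pos_divide_le_eq)
      also have "\<dots> \<le> \<bar>Ps\<bar> * F (\<rho> k l)" using Fr[OF that] by (intro mult_right_mono) auto
      finally show ?thesis .
    qed
    have CleT: "real CARD('d) ^ 2 * (C k l * CV ^ 2) \<le> dd * \<bar>Ps\<bar> * CV^2 * F (\<rho> k l)" if "k \<in> \<Gamma>" "l \<in> \<Gamma>" for k l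
    proof -
      have "C k l * (dd * CV^2) \<le> (\<bar>Ps\<bar> * F (\<rho> k l)) * (dd * CV^2)"
        by (rule mult_right_mono[OF Cle[OF that]]) (use dd0 in simp)
      then show ?thesis by (simp add: dd_def algebra_simps)
    qed
    have Fsum: "(\<Sum>l\<in>L. F (\<rho> k l)) \<le> \<bar>Ss\<bar>" if "finite L" "L \<subseteq> \<Gamma>" "k \<in> \<Gamma>" for L k
    proof -
      have "(\<Sum>l\<in>L. F (\<rho> k l)) = (\<Sum>l\<in>L. F (\<rho> l k))"
        using that rho by (intro sum.cong) auto
      also have "\<dots> \<le> (\<Sum>\<^sub>\<infinity>x\<in>\<Gamma>. F (\<rho> x k))"
        by (rule finite_sum_le_infsum[OF summ[OF that(3)] that(1,2)]) (use Fr that(3) in \<open>auto intro: less_imp_le\<close>)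
      also have "\<dots> \<le> Ss" unfolding Ss_def by (rule cSUP_upper[OF that(3) bddS])
      also have "\<dots> \<le> \<bar>Ss\<bar>" by simp
      finally show ?thesis .
    qed
    show "let C0v = C0 CV (SUP (k, l)\<in>\<Gamma> \<times> \<Gamma>. C k l / F (\<rho> k l))
                 (SUP y\<in>\<Gamma>. \<Sum>\<^sub>\<infinity>x\<in>\<Gamma>. F (\<rho> x y)) CF
                 (SUP k\<in>\<Gamma>. 1 / m k) (SUP k\<in>\<Gamma>. \<nu> k)
    in C0v > 0 \<and>
     (\<forall>X Y L (f0 :: 'd phase \<Rightarrow> real) (g0 :: 'd phase \<Rightarrow> real) (\<Phi> :: real \<Rightarrow> 'd phase \<Rightarrow> 'd phase) t.
        finite X \<and> finite Y \<and> (\<forall>x\<in>X. \<forall>y\<in>Y. \<rho> x y > 0)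
        \<and> finite L \<and> L \<subseteq> \<Gamma> \<and> X \<union> Y \<subseteq> L
        \<and> C1b_Omega X f0 \<and> C1b_Omega Y g0
        \<and> is_ham_flow L (hamiltonian L m \<nu> V) \<Phi>
      \<longrightarrow>
        (let f = (\<lambda>z. f0 (proj X z)); g = (\<lambda>z. g0 (proj Y z));
             D = (\<Sum>x\<in>X. \<Sum>y\<in>Y. F (\<rho> x y))
         in \<forall>z\<in>Omega L.
              \<bar>poisson L (\<lambda>w. f (\<Phi> t w)) g z\<bar>
                \<le> 4 * C1_norm L f * C1_norm L g * sqrt C0v * sinh (sqrt C0v * \<bar>t\<bar>) * D
            \<and> \<bar>poisson L (\<lambda>w. f (\<Phi> t w)) g z\<bar>
                \<le> 4 * C1_norm L f * C1_norm L g * sqrt C0v * (exp (sqrt C0v * \<bar>t\<bar>) - 1) * D))"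
      unfolding Let_def Ps_def[symmetric] Ss_def[symmetric] sm_def[symmetric] sn_def[symmetric] sqC0
    proof (intro conjI allI impI ballI)
      show "0 < C0 CV Ps Ss CF sm sn" using R1 by (simp add: C0_def R_def)
      fix X Y L and f0 g0 :: "'d phase \<Rightarrow> real" and \<Phi> :: "real \<Rightarrow> 'd phase \<Rightarrow> 'd phase" and t :: real and z :: "'d phase"
      assume A: "finite X \<and> finite Y \<and> (\<forall>x\<in>X. \<forall>y\<in>Y. \<rho> x y > 0)
        \<and> finite L \<and> L \<subseteq> \<Gamma> \<and> X \<union> Y \<subseteq> L
        \<and> C1b_Omega X f0 \<and> C1b_Omega Y g0
        \<and> is_ham_flow L (hamiltonian L m \<nu> V) \<Phi>"
        and z: "z \<in> Omega L"
      have finL: "finite L" and LG: "L \<subseteq> \<Gamma>" and XL: "X \<subseteq> L" and YL: "Y \<subseteq> L" and f0: "C1b_Omega X f0"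
        and g0: "C1b_Omega Y g0" and fl: "is_ham_flow L (hamiltonian L m \<nu> V) \<Phi>"
        and rpos: "\<forall>x\<in>X. \<forall>y\<in>Y. \<rho> x y > 0" using A by auto
      have disj: "x \<noteq> y" if "x \<in> X" "y \<in> Y" for x y
        using rpos that rho[of x x] XL LG by force
      have LGk: "k \<in> \<Gamma>" if "k \<in> L" for k using LG that by auto
      interpret hs: hsys L m \<nu> V C CV \<Phi> "\<lambda>k l. F (\<rho> k l)" \<kappa> "\<bar>Ss\<bar>" CF
      proof (unfold_locales)
        show "finite L" by (rule finL)
        show "is_ham_flow L (hamiltonian L m \<nu> V) \<Phi>" by (rule fl)
        show "0 < CF" by (rule CF)
        show "0 \<le> \<bar>Ss\<bar>" by simp
        show "0 \<le> \<kappa>" by (rule \<kappa>0)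
        fix k l assume k: "k \<in> L" and l: "l \<in> L"
        show "smooth_fun (V k l)" using Vh[OF LGk[OF k] LGk[OF l]] by blast
        show "\<And>x. V k l x = V l k (- x)" using Vh[OF LGk[OF k] LGk[OF l]] by blast
        show "\<And>\<beta> x. \<bar>partial_iter \<beta> (V k l) x\<bar> \<le> C k l * CV ^ length \<beta>" using Vh[OF LGk[OF k] LGk[OF l]] by blast
        show "0 \<le> F (\<rho> k l)" using Fr[OF LGk[OF k] LGk[OF l]] by simp
        show "(\<Sum>j\<in>L. F (\<rho> k j) * F (\<rho> j l)) \<le> CF * F (\<rho> k l)"
        proof -
          have "(\<Sum>j\<in>L. F (\<rho> k j) * F (\<rho> j l)) \<le> (\<Sum>\<^sub>\<infinity>j\<in>\<Gamma>. F (\<rho> k j) * F (\<rho> j l))"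
            using conv[OF LGk[OF k] LGk[OF l]] finL LG Fr LGk[OF k] LGk[OF l]
            by (intro finite_sum_le_infsum) (auto intro!: mult_nonneg_nonneg less_imp_le)
          then show ?thesis using conv[OF LGk[OF k] LGk[OF l]] by linarith
        qed
        have Cl: "real CARD('d) ^ 2 * (C k l * CV ^ 2) \<le> dd * \<bar>Ps\<bar> * CV^2 * F (\<rho> k l)"
          by (rule CleT[OF LGk[OF k] LGk[OF l]])
        also have "\<dots> \<le> \<kappa> / 2 * F (\<rho> k l)"
          using Fr[OF LGk[OF k] LGk[OF l]] dd0
          by (intro mult_right_mono) (auto simp: \<kappa>_def kap_def algebra_simps)
        finally show "real CARD('d) ^ 2 * (C k l * CV ^ 2) \<le> \<kappa> / 2 * F (\<rho> k l)" .
      next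
        fix k assume k: "k \<in> L"
        show "(\<Sum>j\<in>L. F (\<rho> k j)) \<le> \<bar>Ss\<bar>" by (rule Fsum[OF finL LG LGk[OF k]])
        have nu: "\<bar>\<nu> k\<bar> \<le> \<bar>sn\<bar>"
        proof -
          have "\<nu> k \<le> sn" unfolding sn_def by (rule cSUP_upper[OF LGk[OF k] bddnu])
          then show ?thesis using mnu[OF LGk[OF k]] by simp
        qed
        have mm: "\<bar>1 / m k\<bar> \<le> \<bar>sm\<bar>"
        proof -
          have "1 / m k \<le> sm" unfolding sm_def by (rule cSUP_upper[OF LGk[OF k] bddm])
          then show ?thesis using mnu[OF LGk[OF k]] by simp
        qed
        have "(\<Sum>l\<in>L. real CARD('d) ^ 2 * (C k l * CV ^ 2)) \<le> (\<Sum>l\<in>L. dd * \<bar>Ps\<bar> * CV^2 * F (\<rho> k l))"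
          using CleT LGk[OF k] LGk by (intro sum_mono) blast
        also have "\<dots> = dd * \<bar>Ps\<bar> * CV^2 * (\<Sum>l\<in>L. F (\<rho> k l))" by (simp add: sum_distrib_left)
        also have "\<dots> \<le> dd * \<bar>Ps\<bar> * CV^2 * \<bar>Ss\<bar>"
          by (rule mult_left_mono[OF Fsum[OF finL LG LGk[OF k]]]) (use dd0 in simp)
        finally have sC: "(\<Sum>l\<in>L. real CARD('d) ^ 2 * (C k l * CV ^ 2)) \<le> dd * \<bar>Ps\<bar> * CV^2 * \<bar>Ss\<bar>" .
        have "dd * \<bar>Ps\<bar> * CV^2 * \<bar>Ss\<bar> \<le> dd * \<bar>Ps\<bar> * CV^2 * (\<bar>Ss\<bar> + 1)"
          using dd0 by (simp add: mult_left_mono)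
        then show "\<bar>\<nu> k\<bar> + \<bar>1 / m k\<bar> + (\<Sum>l\<in>L. real CARD('d) ^ 2 * (C k l * CV ^ 2)) \<le> \<kappa> / 2 * F (\<rho> k k)"
          using nu mm sC Frr[OF LGk[OF k]] by (simp add: \<kappa>_def kap_def)
      qed
      have PB: "\<bar>poisson L (\<lambda>w. f0 (proj X (\<Phi> t w))) (\<lambda>w. g0 (proj Y w)) z\<bar>
         \<le> 4 * real CARD('d) ^ 2 * C1_norm L (\<lambda>w. f0 (proj X w)) * C1_norm L (\<lambda>w. g0 (proj Y w)) *
            ((exp (\<kappa> * CF * \<bar>t\<bar>) - 1) / CF) * (\<Sum>x\<in>X. \<Sum>y\<in>Y. F (\<rho> x y))"
        by (rule hs.poisson_bound[OF XL YL disj f0 g0 z])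
      define Gf where "Gf = C1_norm L (\<lambda>w. f0 (proj X w))"
      define Gg where "Gg = C1_norm L (\<lambda>w. g0 (proj Y w))"
      define D where "D = (\<Sum>x\<in>X. \<Sum>y\<in>Y. F (\<rho> x y))"
      have Gf0: "0 \<le> Gf" unfolding Gf_def by (rule C1_norm_bounds(3)[OF finL XL f0])
      have Gg0: "0 \<le> Gg" unfolding Gg_def by (rule C1_norm_bounds(3)[OF finL YL g0])
      have D0: "0 \<le> D" unfolding D_def using Fr XL YL LG
        by (intro sum_nonneg) (meson less_imp_le subsetD)
      have key: "dd * ((exp ((\<kappa> * CF) * \<bar>t\<bar>) - 1) / CF) \<le> R * sinh (R * \<bar>t\<bar>)"
      proof (rule final_arith)
        show "0 \<le> \<kappa> * CF" using \<kappa>0 CF by simp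
        have "0 \<le> 2 * dd / CF" using dd0 CF by simp
        moreover have "\<kappa> * CF \<le> \<bar>\<kappa> * CF\<bar>" by simp
        ultimately show "\<kappa> * CF \<le> R" using CF by (simp add: R_def Rf_def \<kappa>_def)
        show "2 * dd / CF \<le> R" using dd0 CF \<kappa>0 by (simp add: R_def Rf_def \<kappa>_def)
      qed (use CF dd0 in auto)
      have M0: "0 \<le> 4 * Gf * Gg * D" using Gf0 Gg0 D0 by simp
      have "\<bar>poisson L (\<lambda>w. f0 (proj X (\<Phi> t w))) (\<lambda>w. g0 (proj Y w)) z\<bar> \<le> (4 * Gf * Gg * D) * (dd * ((exp ((\<kappa> * CF) * \<bar>t\<bar>) - 1) / CF))"
        using PB unfolding Gf_def Gg_def D_def dd_def by (simp add: algebra_simps)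
      also have "\<dots> \<le> (4 * Gf * Gg * D) * (R * sinh (R * \<bar>t\<bar>))"
        by (rule mult_left_mono[OF key M0])
      finally have B1: "\<bar>poisson L (\<lambda>w. f0 (proj X (\<Phi> t w))) (\<lambda>w. g0 (proj Y w)) z\<bar> \<le> 4 * Gf * Gg * R * sinh (R * \<bar>t\<bar>) * D"
        by (simp add: algebra_simps)
      have "sinh (R * \<bar>t\<bar>) \<le> exp (R * \<bar>t\<bar>) - 1" using R1 by (intro sinh_le_expm1) simp
      then have "4 * Gf * Gg * R * sinh (R * \<bar>t\<bar>) * D \<le> 4 * Gf * Gg * R * (exp (R * \<bar>t\<bar>) - 1) * D"
        using Gf0 Gg0 D0 R1 by (intro mult_right_mono mult_left_mono) auto
      with B1 show "\<bar>poisson L (\<lambda>w. f0 (proj X (\<Phi> t w))) (\<lambda>z. g0 (proj Y z)) z\<bar>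
          \<le> 4 * C1_norm L (\<lambda>z. f0 (proj X z)) * C1_norm L (\<lambda>z. g0 (proj Y z)) * R * sinh (R * \<bar>t\<bar>) * (\<Sum>x\<in>X. \<Sum>y\<in>Y. F (\<rho> x y))"
        and "\<bar>poisson L (\<lambda>w. f0 (proj X (\<Phi> t w))) (\<lambda>z. g0 (proj Y z)) z\<bar>
          \<le> 4 * C1_norm L (\<lambda>z. f0 (proj X z)) * C1_norm L (\<lambda>z. g0 (proj Y z)) * R * (exp (R * \<bar>t\<bar>) - 1) * (\<Sum>x\<in>X. \<Sum>y\<in>Y. F (\<rho> x y))"
        unfolding Gf_def Gg_def D_def by simp_all
    qed
  qed
qed

end
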